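(* In the setting described in the context (a $k$-player $\alpha$-anchored game, a deterministic strategy for $G^n$, $C=\{m+1,\dots,n\}$, and the random variables $X,Y,Z,\Omega$, event $W$ and quantity $\delta$ defined there), the following hold: (i) $\mathbb{E}_{i\in[m]}\|\mathsf{P}_{X_iY_i\Omega_i|W}-\mathsf{P}_{X_iY_i\Omega_i}\|\le\sqrt{\delta}$; (ii) $\mathbb{E}_{i\in[m]}\|\mathsf{P}_{X_iY_iZ\Omega_{-i}|W}-\mathsf{P}_{X_i|Y_i}\mathsf{P}_{Y_iZ\Omega_{-i}|W}\|\le\sqrt{\delta}$; (iii) $\mathbb{E}_{i\in[m]}\|\mathsf{P}_{Y_iZ\Omega|W}-\mathsf{P}_{Y_i|\Omega_i}\mathsf{P}_{Z\Omega|W}\|\le\sqrt{\delta}$.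
   Context: Let $G=(\mathcal{X},\mathcal{A},\mu,V)$ be a $k$-player game: $\mathcal{X}=\mathcal{X}^1\times\cdots\times\mathcal{X}^k$, $\mathcal{A}=\mathcal{A}^1\times\cdots\times\mathcal{A}^k$ finite, $\mu$ a distribution on $\mathcal{X}$, $V:\mathcal{X}\times\mathcal{A}\to\{0,1\}$. Assume $G$ is $\alpha$-anchored with anchor sets $\mathcal{X}^t_\perp\subseteq\mathcal{X}^t$: the marginal probability that $x^t\in\mathcal{X}^t_\perp$ is at least $\alpha$ for each $t$, and $\mu(x)=\mu(x|_{\overline{F}_x})\prod_{t\in F_x}\mu(x^t)$ for all $x$, where $F_x=\{t:x^t\in\mathcal{X}^t_\perp\}$, $\overline F_x=[k]\setminus F_x$ and $\mu(x|_S)$, $\mu(x^t)$ are marginals. Fix $n$, integers $1\le m<n$, $C=\{m+1,\dots,n\}$, and a deterministic strategy for $G^n$, i.e. functions $f^t:(\mathcal{X}^t)^n\to(\mathcal{A}^t)^n$. Let $X=(X_1,\dots,X_n)$ with $X_i=(X_i^1,\dots,X_i^k)$ be distributed as $\mu^{\otimes n}$, let $(A_1^t,\dots,A_n^t)=f^t(X_1^t,\dots,X_n^t)$, $A_i=(A_i^1,\dots,A_i^k)$, and $Z=(A_j)_{j\in C}$. Let $W$ be the event that $V(X_j,A_j)=1$ for all $j\in C$, assume $\Pr(W)>0$, and set $\delta=\frac{|C|\log|\mathcal{A}|+\log(1/\Pr(W))}{m}$. For each $i,t$ let $Y_i^t=X_i^t$ if $X_i^t\notin\mathcal{X}^t_\perp$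 and $Y_i^t=\perp$ otherwise; $Y_i=(Y_i^1,\dots,Y_i^k)$; $Y_i^{-t}$ is $Y_i$ with coordinate $t$ omitted and $Y_i^S=(Y_i^t)_{t\in S}$. For $i\in[m]$ let $D_i$ be a uniformly random subset of $[k]$ of size $k-1$, the $D_i$ independent of each other and of $X$; let $M_i=Y_i^{D_i}$ and $\Omega_i=(D_i,M_i)$; for $j\in C$ let $\Omega_j=X_j$. Let $\Omega=(\Omega_1,\dots,\Omega_n)$ and $\Omega_{-i}$ be $\Omega$ with $\Omega_i$ omitted. Notation: $\mathsf{P}_U$ is the distribution of $U$, $\mathsf{P}_{U|W}$ and $\mathsf{P}_{U|T}$ denote conditional distributions; a product such as $\mathsf{P}_{U}\mathsf{P}_{T|U'}$ denotes the joint distribution $(u,t)\mapsto\mathsf{P}_U(u)\mathsf{P}_{T|U'=u'}(t)$ where $u'$ is the part of $u$ corresponding to $U'$ (e.g. $\mathsf{P}_{X_i|Y_i}\mathsf{P}_{Y_iZ\Omega_{-i}|W}$ is $(x,y,z,\omega)\mapsto\mathsf{P}_{Y_iZ\Omega_{-i}|W}(y,z,\omega)\mathsf{P}_{X_i|Y_i=y}(x)$). $\|\cdot\|$ is total variation distance, and $\mathbb{E}_{i\in[m]}$ is the uniform average over $i\in[m]$. *)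

theory Defs
  imports "HOL-Probability.Probability"
begin

definition tvd :: "'a pmf \<Rightarrow> 'a pmf \<Rightarrow> real" where
  "tvd p q = infsum (\<lambda>x. \<bar>pmf p x - pmf q x\<bar>) UNIV / 2"

definition cond_distr :: "'w pmf \<Rightarrow> ('w \<Rightarrow> 'u) \<Rightarrow> ('w \<Rightarrow> 't) \<Rightarrow> 't \<Rightarrow> 'u pmf" where
  "cond_distr P U T t = map_pmf U (cond_pmf P {w. T w = t})"

definition anchor_players :: "nat \<Rightarrow> (nat \<Rightarrow> 'x set) \<Rightarrow> (nat \<Rightarrow> 'x) \<Rightarrow> nat set" where
  "anchor_players k Xp x = {t \<in> {..<k}. x t \<in> Xp t}"

(* G = (X, A, mu, V) is alpha-anchored with anchor sets Xp.
   Questions of the k players: x :: nat => 'x with x t \<in> Xs t for t < k. *)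
definition anchored :: "nat \<Rightarrow> (nat \<Rightarrow> 'x set) \<Rightarrow> (nat \<Rightarrow> 'x) pmf \<Rightarrow> real \<Rightarrow> (nat \<Rightarrow> 'x set) \<Rightarrow> bool" where
  "anchored k Xs \<mu> \<alpha> Xp \<longleftrightarrow>
     set_pmf \<mu> \<subseteq> PiE {..<k} Xs \<and>
     (\<forall>t<k. Xp t \<subseteq> Xs t) \<and>
     (\<forall>t<k. \<alpha> \<le> measure_pmf.prob \<mu> {x. x t \<in> Xp t}) \<and>
     (\<forall>x\<in>PiE {..<k} Xs.
        pmf \<mu> x =
          measure_pmf.prob \<mu> {y. \<forall>t\<in>{..<k} - anchor_players k Xp x. y t = x t}
          * (\<Prod>t\<in>anchor_players k Xp x. measure_pmf.prob \<mu> {y. y t = x t}))"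

(* Sample space: w = (X, D), X i = i-th question tuple (i < n), D i = random (k-1)-subset of
   players (i < m).  Rounds are indexed 0..n-1; [m] = {0..<m}, C = {m..<n}. *)
definition sample :: "nat \<Rightarrow> nat \<Rightarrow> nat \<Rightarrow> (nat \<Rightarrow> 'x) pmf
    \<Rightarrow> ((nat \<Rightarrow> nat \<Rightarrow> 'x) \<times> (nat \<Rightarrow> nat set)) pmf" where
  "sample k n m \<mu> = pair_pmf (Pi_pmf {..<n} undefined (\<lambda>_. \<mu>))
      (Pi_pmf {..<m} undefined (\<lambda>_. pmf_of_set {S. S \<subseteq> {..<k} \<and> card S = k - 1}))"

type_synonym ('x) sample_pt = "(nat \<Rightarrow> nat \<Rightarrow> 'x) \<times> (nat \<Rightarrow> nat set)"

definition Xv :: "'x sample_pt \<Rightarrow> nat \<Rightarrow> (nat \<Rightarrow> 'x)" where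
  "Xv w i = fst w i"

(* Y_i^t = X_i^t if X_i^t not in the anchor set, else \<bottom> (= None) *)
definition Yv :: "nat \<Rightarrow> (nat \<Rightarrow> 'x set) \<Rightarrow> 'x sample_pt \<Rightarrow> nat \<Rightarrow> (nat \<Rightarrow> 'x option)" where
  "Yv k Xp w i = (\<lambda>t. if t < k then (if fst w i t \<in> Xp t then None else Some (fst w i t)) else None)"

(* A_j: answers in round j, player t answers f t (X_1^t,...,X_n^t) at position j *)
definition Av :: "nat \<Rightarrow> (nat \<Rightarrow> (nat \<Rightarrow> 'x) \<Rightarrow> (nat \<Rightarrow> 'a)) \<Rightarrow> 'x sample_pt \<Rightarrow> nat \<Rightarrow> (nat \<Rightarrow> 'a)" where
  "Av k f w j = (\<lambda>t. if t < k then f t (\<lambda>i. fst w i t) j else undefined)"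

definition Zv :: "nat \<Rightarrow> (nat \<Rightarrow> (nat \<Rightarrow> 'x) \<Rightarrow> (nat \<Rightarrow> 'a)) \<Rightarrow> nat \<Rightarrow> nat \<Rightarrow> 'x sample_pt \<Rightarrow> (nat \<Rightarrow> nat \<Rightarrow> 'a)" where
  "Zv k f m n w = restrict (Av k f w) {m..<n}"

definition Omv :: "nat \<Rightarrow> (nat \<Rightarrow> 'x set) \<Rightarrow> nat \<Rightarrow> nat \<Rightarrow> 'x sample_pt \<Rightarrow> nat
    \<Rightarrow> (nat set \<times> (nat \<Rightarrow> 'x option)) + (nat \<Rightarrow> 'x)" where
  "Omv k Xp m n w i =
     (if i < m then Inl (snd w i, restrict (Yv k Xp w i) (snd w i))
      else if i < n then Inr (fst w i) else undefined)"

definition Omv_minus :: "nat \<Rightarrow> (nat \<Rightarrow> 'x set) \<Rightarrow> nat \<Rightarrow> nat \<Rightarrow> nat \<Rightarrow> 'x sample_pt \<Rightarrow> nat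
    \<Rightarrow> (nat set \<times> (nat \<Rightarrow> 'x option)) + (nat \<Rightarrow> 'x)" where
  "Omv_minus k Xp m n i w = (\<lambda>j. if j = i then undefined else Omv k Xp m n w j)"

definition Win :: "nat \<Rightarrow> (nat \<Rightarrow> (nat \<Rightarrow> 'x) \<Rightarrow> (nat \<Rightarrow> 'a)) \<Rightarrow> ((nat \<Rightarrow> 'x) \<Rightarrow> (nat \<Rightarrow> 'a) \<Rightarrow> bool)
    \<Rightarrow> nat \<Rightarrow> nat \<Rightarrow> 'x sample_pt set" where
  "Win k f V m n = {w. \<forall>j\<in>{m..<n}. V (fst w j) (Av k f w j)}"

end

theory Submission
  imports Defs
begin

no_notation Infinite_Sum.abs_summable_on (infixr \<open>abs'_summable'_on\<close> 46)

lemma tvd_alt: "tvd A B = infsetsum (\<lambda>v. \<bar>pmf A v - pmf B v\<bar>) UNIV / 2"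
proof -
  have "(\<lambda>v. \<bar>pmf A v - pmf B v\<bar>) abs_summable_on UNIV"
    using abs_summable_on_normI[OF abs_summable_on_diff[OF pmf_abs_summable pmf_abs_summable]]
    by simp
  then show ?thesis unfolding tvd_def by (simp add: infsetsum_infsum)
qed

lemma amgm_lam:
  fixes lam p q :: real assumes "lam > 0"
  shows "p * q \<le> (lam * p\<^sup>2 + q\<^sup>2 / lam) / 2"
proof -
  have "(lam*p\<^sup>2 + q\<^sup>2/lam) - 2*(p*q) = (lam*p - q)\<^sup>2 / lam" using assms by (simp add: field_simps power2_eq_square)
  moreover have "(lam*p - q)\<^sup>2 / lam \<ge> 0" using assms by simp
  ultimately show ?thesis by simp
qed

lemma abs_summable_on_cdiv' [intro]:
  fixes f :: "'a \<Rightarrow> real"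
  shows "f abs_summable_on A \<Longrightarrow> (\<lambda>x. f x / c) abs_summable_on A"
  using abs_summable_on_cmult_left[where c="1/c" and f=f and A=A] by simp

lemma pmf_sum1: "infsetsum (pmf A) UNIV = 1"
  by (simp add: infsetsum_pmf_eq_1)

lemma tv_hellinger:
  fixes A B :: "'v pmf"
  defines "\<beta> \<equiv> infsetsum (\<lambda>v. sqrt (pmf A v * pmf B v)) UNIV"
  shows "tvd A B ^ 2 \<le> 1 - \<beta>\<^sup>2" and "\<beta> \<le> 1" and "\<beta> \<ge> 0"
proof -
  define a where "a = pmf A"
  define b where "b = pmf B"
  define h where "h v = sqrt (a v * b v)" for v
  have a0: "a v \<ge> 0" "b v \<ge> 0" for v by (auto simp: a_def b_def)
  have sa: "a abs_summable_on UNIV" "b abs_summable_on UNIV" by (auto simp: a_def b_def)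
  have sab: "(\<lambda>v. a v + b v) abs_summable_on UNIV" using sa by auto
  have hle: "h v \<le> (a v + b v) / 2" for v
  proof -
    have "sqrt (a v * b v) \<le> (a v + b v) / 2" using a0[of v] arith_geo_mean_sqrt by auto
    thus ?thesis by (simp add: h_def)
  qed
  have h0: "h v \<ge> 0" for v using a0 by (simp add: h_def)
  have hs: "h abs_summable_on UNIV"
  proof (rule abs_summable_on_comparison_test'[OF sab])
    fix x
    have "h x \<le> (a x + b x) / 2" "h x \<ge> 0" "a x \<ge> 0" "b x \<ge> 0" using hle h0 a0 by auto
    thus "norm (h x) \<le> a x + b x" by simp
  qed
  have s1: "infsetsum a UNIV = 1" "infsetsum b UNIV = 1" by (auto simp: a_def b_def pmf_sum1)
  have bdef: "\<beta> = infsetsum h UNIV" by (simp add: \<beta>_def h_def a_def b_def)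
  have "\<beta> \<le> infsetsum (\<lambda>v. (a v + b v) / 2) UNIV"
    unfolding bdef by (rule infsetsum_mono[OF hs]) (use sab hle in \<open>auto intro!: abs_summable_on_cdiv'\<close>)
  also have "\<dots> = 1" using sa s1 by (simp add: infsetsum_cdiv infsetsum_add sab)
  finally show b1: "\<beta> \<le> 1" .
  show b0: "\<beta> \<ge> 0" unfolding bdef by (rule infsetsum_nonneg) (use h0 in auto)
  define S where "S = infsetsum (\<lambda>v. \<bar>a v - b v\<bar>) UNIV"
  have tS: "tvd A B = S / 2" by (simp add: tvd_alt S_def a_def b_def)
  have sd: "(\<lambda>v. \<bar>a v - b v\<bar>) abs_summable_on UNIV"
    using abs_summable_on_normI[OF abs_summable_on_diff[OF sa]] by simp
  have S0: "S \<ge> 0" unfolding S_def by (rule infsetsum_nonneg) auto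
  have Sb: "S \<le> lam * (1 - \<beta>) + (1 + \<beta>) / lam" if lam: "lam > 0" for lam
  proof -
    have pt: "\<bar>a v - b v\<bar> \<le> lam / 2 * (a v + b v - 2 * h v) + (a v + b v + 2 * h v) / (2 * lam)" for v
    proof -
      define x where "x = sqrt (a v)"
      define y where "y = sqrt (b v)"
      have xy: "x \<ge> 0" "y \<ge> 0" "x\<^sup>2 = a v" "y\<^sup>2 = b v" "h v = x * y"
        using a0[of v] by (auto simp: x_def y_def h_def real_sqrt_mult)
      have "\<bar>a v - b v\<bar> = \<bar>(x - y) * (x + y)\<bar>"
        by (simp flip: xy(3,4) add: power2_eq_square algebra_simps)
      also have "\<dots> = \<bar>x - y\<bar> * (x + y)" using xy by (simp add: abs_mult)
      also have "\<dots> \<le> (lam * \<bar>x - y\<bar>\<^sup>2 + (x + y)\<^sup>2 / lam) / 2" by (rule amgm_lam[OF lam])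
      also have "\<dots> = lam / 2 * (a v + b v - 2 * h v) + (a v + b v + 2 * h v) / (2 * lam)"
        using xy lam by (simp add: power2_eq_square field_simps)
      finally show ?thesis .
    qed
    have s2: "(\<lambda>v. a v + b v - 2 * h v) abs_summable_on UNIV" "(\<lambda>v. a v + b v + 2 * h v) abs_summable_on UNIV"
      using sab hs by auto
    have "S \<le> infsetsum (\<lambda>v. lam / 2 * (a v + b v - 2 * h v) + (a v + b v + 2 * h v) / (2 * lam)) UNIV"
      unfolding S_def
      by (rule infsetsum_mono) (use sd sa s2 pt in \<open>auto intro!: abs_summable_on_normI abs_summable_on_diff abs_summable_on_add abs_summable_on_cmult_right abs_summable_on_cdiv'\<close>)
    also have "\<dots> = infsetsum (\<lambda>v. lam / 2 * (a v + b v - 2 * h v) + (1 / (2 * lam)) * (a v + b v + 2 * h v)) UNIV"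
      by simp
    also have "\<dots> = lam / 2 * infsetsum (\<lambda>v. a v + b v - 2 * h v) UNIV + (1 / (2 * lam)) * infsetsum (\<lambda>v. a v + b v + 2 * h v) UNIV"
    proof -
      have X: "(\<lambda>v. lam / 2 * (a v + b v - 2 * h v)) abs_summable_on UNIV"
              "(\<lambda>v. (1 / (2 * lam)) * (a v + b v + 2 * h v)) abs_summable_on UNIV"
         apply (rule abs_summable_on_cmult_right, rule s2(1))
        by (rule abs_summable_on_cmult_right, rule s2(2))
      show ?thesis
        apply (subst infsetsum_add[OF X])
        apply (subst infsetsum_cmult_right[where c="lam/2"], rule s2(1))
        apply (subst infsetsum_cmult_right[where c="1/(2*lam)"], rule s2(2))
        by (rule refl)
    qed
    also have "infsetsum (\<lambda>v. a v + b v - 2 * h v) UNIV = 2 - 2 * \<beta>"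
      using sa hs s1 sab by (simp add: infsetsum_add infsetsum_diff infsetsum_cmult_right abs_summable_on_cmult_right bdef)
    also have "infsetsum (\<lambda>v. a v + b v + 2 * h v) UNIV = 2 + 2 * \<beta>"
      using sa hs s1 sab by (simp add: infsetsum_add infsetsum_diff infsetsum_cmult_right abs_summable_on_cmult_right bdef)
    also have "lam / 2 * (2 - 2 * \<beta>) + (1 / (2 * lam)) * (2 + 2 * \<beta>) = lam * (1 - \<beta>) + (1 + \<beta>) / lam"
      using lam by (simp add: field_simps)
    finally show ?thesis .
  qed
  have "S\<^sup>2 \<le> 4 * (1 - \<beta>\<^sup>2)"
  proof (cases "\<beta> < 1")
    case True
    define lam where "lam = sqrt ((1 + \<beta>) / (1 - \<beta>))"
    have lp: "lam > 0" using True b0 by (simp add: lam_def)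
    have l2: "lam\<^sup>2 = (1 + \<beta>) / (1 - \<beta>)" using True b0 by (simp add: lam_def)
    have "lam * (1 - \<beta>) + (1 + \<beta>) / lam = 2 * sqrt (1 - \<beta>\<^sup>2)"
    proof -
      have e1: "lam * (1 - \<beta>) = sqrt ((1 + \<beta>) * (1 - \<beta>))"
      proof (rule real_sqrt_unique[symmetric])
        show "(lam * (1 - \<beta>))\<^sup>2 = (1 + \<beta>) * (1 - \<beta>)" using True
          by (subst power_mult_distrib, subst l2) (simp add: power2_eq_square field_simps)
        show "0 \<le> lam * (1 - \<beta>)" using lp True by simp
      qed
      have e2: "(1 + \<beta>) / lam = sqrt ((1 + \<beta>) * (1 - \<beta>))"
      proof (rule real_sqrt_unique[symmetric])
        show "((1 + \<beta>) / lam)\<^sup>2 = (1 + \<beta>) * (1 - \<beta>)" using True b0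
          by (subst power_divide, subst l2) (simp add: power2_eq_square field_simps)
        show "0 \<le> (1 + \<beta>) / lam" using lp b0 by simp
      qed
      show ?thesis using e1 e2 by (simp add: power2_eq_square algebra_simps)
    qed
    with Sb[OF lp] have "S \<le> 2 * sqrt (1 - \<beta>\<^sup>2)" by simp
    hence "S\<^sup>2 \<le> (2 * sqrt (1 - \<beta>\<^sup>2))\<^sup>2" using S0 by (intro power_mono) auto
    also have "\<dots> = 4 * (1 - \<beta>\<^sup>2)" using b0 b1 by (simp add: power_mult_distrib power_le_one)
    finally show ?thesis .
  next
    case False
    hence b1': "\<beta> = 1" using b1 by simp
    have "S = 0"
    proof (rule ccontr)
      assume "S \<noteq> 0" hence Sp: "S > 0" using S0 by simp
      have "S \<le> (4 / S) * (1 - \<beta>) + (1 + \<beta>) / (4 / S)" using Sb[of "4 / S"] Sp by simp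
      thus False using Sp b1' by simp
    qed
    thus ?thesis using b1' by simp
  qed
  moreover have "S\<^sup>2 = 4 * (tvd A B)\<^sup>2" unfolding tS by (simp add: power2_eq_square)
  ultimately show "tvd A B ^ 2 \<le> 1 - \<beta>\<^sup>2" by simp
qed

lemma integrable_pmf_iff:
  fixes f :: "'a \<Rightarrow> real"
  shows "integrable (measure_pmf p) f \<longleftrightarrow> (\<lambda>x. pmf p x * f x) abs_summable_on UNIV"
  unfolding measure_pmf_eq_density abs_summable_on_def
  by (subst integrable_density) (auto simp: pmf_nonneg)

lemma sqrt_le_sum:
  fixes a b :: real assumes "0 \<le> a" "0 \<le> b"
  shows "sqrt (a * b) \<le> a + b"
proof -
  have "sqrt (a * b) \<le> (a + b) / 2" using arith_geo_mean_sqrt[of a b] assms by simp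
  thus ?thesis using assms by simp
qed

lemma pinsker_lite:
  fixes A B :: "'v pmf"
  assumes pos: "\<And>v. v \<in> set_pmf A \<Longrightarrow> pmf B v > 0"
    and int: "integrable A (\<lambda>v. ln (pmf A v / pmf B v))"
  shows "tvd A B ^ 2 \<le> (\<integral>v. ln (pmf A v / pmf B v) \<partial>A)"
proof -
  define \<beta> where "\<beta> = infsetsum (\<lambda>v. sqrt (pmf A v * pmf B v)) UNIV"
  define s where "s v = sqrt (pmf B v / pmf A v)" for v
  have ps: "pmf A v * s v = sqrt (pmf A v * pmf B v)" for v
  proof (cases "pmf A v = 0")
    case True thus ?thesis by (simp add: s_def)
  next
    case False
    hence ap: "pmf A v > 0" using pmf_nonneg[of A v] by linarith
    have "pmf A v * s v = sqrt ((pmf A v)\<^sup>2) * sqrt (pmf B v / pmf A v)" using ap by (simp add: s_def)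
    also have "\<dots> = sqrt ((pmf A v)\<^sup>2 * (pmf B v / pmf A v))" by (rule real_sqrt_mult[symmetric])
    also have "(pmf A v)\<^sup>2 * (pmf B v / pmf A v) = pmf A v * pmf B v" using ap by (simp add: power2_eq_square)
    finally show ?thesis .
  qed
  have sabs: "(\<lambda>v. sqrt (pmf A v * pmf B v)) abs_summable_on UNIV"
    by (rule abs_summable_on_comparison_test'[where g="\<lambda>v. pmf A v + pmf B v"])
       (auto intro!: sqrt_le_sum)
  have int_s: "integrable A s" unfolding integrable_pmf_iff ps using sabs by simp
  have Es: "(\<integral>v. s v \<partial>A) = \<beta>" unfolding pmf_expectation_eq_infsetsum ps \<beta>_def ..
  obtain v0 where v0: "v0 \<in> set_pmf A" using set_pmf_not_empty[of A] by blast
  have bpos: "\<beta> > 0"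
  proof -
    have "0 < sqrt (pmf A v0 * pmf B v0)" using pos[OF v0] v0 by (simp add: pmf_positive)
    also have "\<dots> = infsetsum (\<lambda>v. sqrt (pmf A v * pmf B v)) {v0}" by simp
    also have "\<dots> \<le> \<beta>" unfolding \<beta>_def
      by (rule infsetsum_mono_neutral_left[OF _ sabs]) auto
    finally show ?thesis .
  qed
  have pt: "ln (pmf A v / pmf B v) \<ge> - 2 * ln \<beta> - 2 / \<beta> * s v + 2" if v: "v \<in> set_pmf A" for v
  proof -
    have ap: "pmf A v > 0" using v by (simp add: pmf_positive)
    have bp: "pmf B v > 0" using pos[OF v] .
    have sp: "s v > 0" using ap bp by (simp add: s_def)
    have "ln (pmf A v / pmf B v) = - 2 * ln (s v)"
    proof -
      have "ln (s v) = ln (pmf B v / pmf A v) / 2" using ap bp by (simp add: s_def ln_sqrt)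
      also have "ln (pmf B v / pmf A v) = - ln (pmf A v / pmf B v)" using ap bp by (simp add: ln_div)
      finally show ?thesis by simp
    qed
    moreover have "ln (s v / \<beta>) \<le> s v / \<beta> - 1" using sp bpos by (intro ln_le_minus_one) simp
    moreover have "ln (s v / \<beta>) = ln (s v) - ln \<beta>" using sp bpos by (simp add: ln_div)
    ultimately have l: "ln (s v) \<le> ln \<beta> + s v / \<beta> - 1" and e: "ln (pmf A v / pmf B v) = - 2 * ln (s v)" by simp_all
    have "2 / \<beta> * s v = 2 * (s v / \<beta>)" by simp
    with l e show ?thesis by linarith
  qed
  have "(\<integral>v. - 2 * ln \<beta> - 2 / \<beta> * s v + 2 \<partial>A) \<le> (\<integral>v. ln (pmf A v / pmf B v) \<partial>A)"
    by (rule integral_mono_AE) (use int int_s pt in \<open>auto intro!: AE_pmfI\<close>)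
  moreover have "(\<integral>v. - 2 * ln \<beta> - 2 / \<beta> * s v + 2 \<partial>A) = - 2 * ln \<beta>"
    using int_s Es bpos by (simp add: integral_diff integral_add)
  moreover have "tvd A B ^ 2 \<le> 1 - \<beta>\<^sup>2" unfolding \<beta>_def by (rule tv_hellinger)
  moreover have "1 - \<beta>\<^sup>2 \<le> - 2 * ln \<beta>"
  proof -
    have "ln (\<beta>\<^sup>2) \<le> \<beta>\<^sup>2 - 1" using bpos by (intro ln_le_minus_one) simp
    moreover have "ln (\<beta>\<^sup>2) = 2 * ln \<beta>" using bpos by (simp add: ln_realpow)
    ultimately show ?thesis by simp
  qed
  ultimately show ?thesis by linarith
qed

lemma tvd_set_aux:
  fixes A B :: "'v pmf"
  shows "infsetsum (\<lambda>v. \<bar>pmf A v - pmf B v\<bar>) UNIV =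
     infsetsum (\<lambda>v. \<bar>pmf A v - pmf B v\<bar>) T + infsetsum (\<lambda>v. \<bar>pmf A v - pmf B v\<bar>) (- T)"
    and "measure_pmf.prob A T - measure_pmf.prob B T = infsetsum (\<lambda>v. pmf A v - pmf B v) T"
    and "measure_pmf.prob B (-T) - measure_pmf.prob A (-T) = measure_pmf.prob A T - measure_pmf.prob B T"
proof -
  have sd: "(\<lambda>v. \<bar>pmf A v - pmf B v\<bar>) abs_summable_on X" for X
    using abs_summable_on_normI[OF abs_summable_on_diff[OF pmf_abs_summable pmf_abs_summable]]
    by simp
  show "infsetsum (\<lambda>v. \<bar>pmf A v - pmf B v\<bar>) UNIV =
     infsetsum (\<lambda>v. \<bar>pmf A v - pmf B v\<bar>) T + infsetsum (\<lambda>v. \<bar>pmf A v - pmf B v\<bar>) (- T)"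
    using infsetsum_Un_disjoint[OF sd sd, of T "-T"] by (simp add: Un_commute)
  show "measure_pmf.prob A T - measure_pmf.prob B T = infsetsum (\<lambda>v. pmf A v - pmf B v) T"
    by (simp add: measure_pmf_conv_infsetsum infsetsum_diff[OF pmf_abs_summable pmf_abs_summable])
  show "measure_pmf.prob B (-T) - measure_pmf.prob A (-T) = measure_pmf.prob A T - measure_pmf.prob B T"
    using measure_pmf.prob_compl[of T A] measure_pmf.prob_compl[of T B]
    by (simp add: Compl_eq_Diff_UNIV)
qed

lemma tvd_ge_set:
  fixes A B :: "'v pmf"
  shows "measure_pmf.prob A T - measure_pmf.prob B T \<le> tvd A B"
proof -
  have sd: "(\<lambda>v. \<bar>pmf A v - pmf B v\<bar>) abs_summable_on X" for X
    using abs_summable_on_normI[OF abs_summable_on_diff[OF pmf_abs_summable pmf_abs_summable]]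
    by simp
  have sd': "(\<lambda>v. pmf A v - pmf B v) abs_summable_on X" for X
    using abs_summable_on_diff[OF pmf_abs_summable[of A] pmf_abs_summable[of B]] by simp
  have sd'': "(\<lambda>v. pmf B v - pmf A v) abs_summable_on X" for X
    using abs_summable_on_diff[OF pmf_abs_summable[of B] pmf_abs_summable[of A]] by simp
  have 1: "measure_pmf.prob A T - measure_pmf.prob B T \<le> infsetsum (\<lambda>v. \<bar>pmf A v - pmf B v\<bar>) T"
    unfolding tvd_set_aux(2) by (rule infsetsum_mono[OF sd' sd]) auto
  have 2: "measure_pmf.prob B (-T) - measure_pmf.prob A (-T) \<le> infsetsum (\<lambda>v. \<bar>pmf A v - pmf B v\<bar>) (-T)"
    unfolding tvd_set_aux(2)[of B "-T" A] by (rule infsetsum_mono[OF sd'' sd]) auto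
  show ?thesis using 1 2 tvd_set_aux(1)[of A B T] tvd_set_aux(3)[of B T A] unfolding tvd_alt by linarith
qed

lemma tvd_eq_set:
  fixes A B :: "'v pmf"
  shows "\<exists>T. tvd A B = measure_pmf.prob A T - measure_pmf.prob B T"
proof -
  define T where "T = {v. pmf A v > pmf B v}"
  have 1: "infsetsum (\<lambda>v. \<bar>pmf A v - pmf B v\<bar>) T = measure_pmf.prob A T - measure_pmf.prob B T"
    unfolding tvd_set_aux(2) by (rule infsetsum_cong) (auto simp: T_def)
  have 2: "infsetsum (\<lambda>v. \<bar>pmf A v - pmf B v\<bar>) (-T) = measure_pmf.prob B (-T) - measure_pmf.prob A (-T)"
    unfolding tvd_set_aux(2)[of B "-T" A] by (rule infsetsum_cong) (auto simp: T_def)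
  show ?thesis using 1 2 tvd_set_aux(1)[of A B T] tvd_set_aux(3)[of B T A] unfolding tvd_alt
    by (intro exI[of _ T]) linarith
qed

lemma tvd_map_le: "tvd (map_pmf g A) (map_pmf g B) \<le> tvd A B"
proof -
  obtain T where "tvd (map_pmf g A) (map_pmf g B) = measure_pmf.prob (map_pmf g A) T - measure_pmf.prob (map_pmf g B) T"
    using tvd_eq_set by blast
  also have "\<dots> = measure_pmf.prob A (g -` T) - measure_pmf.prob B (g -` T)" by simp
  also have "\<dots> \<le> tvd A B" by (rule tvd_ge_set)
  finally show ?thesis .
qed

lemma tvd_nonneg: "tvd A B \<ge> 0"
  using tvd_ge_set[of A "{}" B] by simp

lemma measure_cond_pmf:
  assumes "measure_pmf.prob Q E > 0"
  shows "measure_pmf.prob (cond_pmf Q E) S = measure_pmf.prob Q (S \<inter> E) / measure_pmf.prob Q E"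
proof -
  have ne: "set_pmf Q \<inter> E \<noteq> {}" using assms measure_pmf_zero_iff[of Q E] by auto
  have "emeasure (measure_pmf Q) E \<noteq> 0" using assms 
    by (simp add: measure_pmf.emeasure_eq_measure)
  then show ?thesis using ne
    by (simp add: cond_pmf.rep_eq Int_commute measure_pmf.emeasure_eq_measure)
qed

lemma pmf_bind_inj:
  assumes inj: "\<And>x u x' u'. f x u = f x' u' \<Longrightarrow> x = x' \<and> u = u'"
  shows "pmf (bind_pmf M (\<lambda>x. map_pmf (f x) (K x))) (f x0 u0) = pmf M x0 * pmf (K x0) u0"
proof -
  have e: "pmf (map_pmf (f x) (K x)) (f x0 u0) = (if x = x0 then pmf (K x0) u0 else 0)" for x
  proof (cases "x = x0")
    case True
    have "inj (f x)" using inj by (auto intro: injI)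
    then show ?thesis using True by (simp add: pmf_map_inj')
  next
    case False
    have "f x -` {f x0 u0} = {}" using inj False by auto
    then show ?thesis using False by (simp add: pmf_map)
  qed
  have "pmf (bind_pmf M (\<lambda>x. map_pmf (f x) (K x))) (f x0 u0) = (\<integral>x. (if x = x0 then pmf (K x0) u0 else 0) \<partial>M)"
    by (simp add: pmf_bind e)
  also have "\<dots> = pmf M x0 * pmf (K x0) u0"
    by (subst integral_measure_pmf_real[where A="{x0}"]) (auto split: if_splits)
  finally show ?thesis .
qed

lemma pmf_pos_mono:
  assumes "\<omega> \<in> set_pmf M" "\<omega> \<in> S"
  shows "measure_pmf.prob M S \<ge> pmf M \<omega>" "measure_pmf.prob M S > 0"
proof -
  have "pmf M \<omega> = measure_pmf.prob M {\<omega>}" by (simp add: measure_pmf_single)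
  also have "\<dots> \<le> measure_pmf.prob M S" using assms by (intro measure_pmf.finite_measure_mono) auto
  finally show "measure_pmf.prob M S \<ge> pmf M \<omega>" .
  thus "measure_pmf.prob M S > 0" using assms(1) pmf_positive[of \<omega> M] by linarith
qed

lemma nn_integral_pmf_1: "(\<integral>\<^sup>+ x. ennreal (pmf p x) \<partial>count_space UNIV) = 1"
  by (simp add: nn_integral_pmf)

lemma integral_le_from_nn:
  fixes f :: "'a \<Rightarrow> real" and M :: "'a pmf"
  assumes nn: "AE x in M. 0 \<le> f x" and le: "(\<integral>\<^sup>+ x. ennreal (f x) \<partial>M) \<le> ennreal c" and c: "0 \<le> c"
  shows "integrable M f" "(\<integral>x. f x \<partial>M) \<le> c"
proof -
  have "(\<integral>\<^sup>+ x. ennreal (f x) \<partial>M) < \<infinity>" using le by (simp add: le_less_trans)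
  then show i: "integrable M f" by (intro integrableI_nonneg nn) auto
  have "ennreal (\<integral>x. f x \<partial>M) = (\<integral>\<^sup>+ x. ennreal (f x) \<partial>M)"
    by (rule nn_integral_eq_integral[OF i nn, symmetric])
  with le have "ennreal (\<integral>x. f x \<partial>M) \<le> ennreal c" by simp
  with c show "(\<integral>x. f x \<partial>M) \<le> c" by simp
qed

lemma core:
  fixes Q :: "'w pmf" and E :: "'w set" and T :: "'w \<Rightarrow> 't" and Z :: "'w \<Rightarrow> 'z"
    and U :: "'w \<Rightarrow> nat \<Rightarrow> 'u" and \<kappa> :: "nat \<Rightarrow> 't \<Rightarrow> 'u pmf" and Zs :: "'z set" and m :: nat
  assumes QE: "measure_pmf.prob Q E > 0"
    and Zs: "finite Zs" "\<And>\<omega>. \<omega> \<in> set_pmf Q \<Longrightarrow> \<omega> \<in> E \<Longrightarrow> Z \<omega> \<in> Zs"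
    and ext: "\<And>\<omega> i. i \<ge> m \<Longrightarrow> U \<omega> i = undefined"
    and CI: "\<And>t u. measure_pmf.prob Q {\<omega>. T \<omega> = t \<and> U \<omega> = u}
                 \<le> measure_pmf.prob Q {\<omega>. T \<omega> = t} * (\<Prod>i<m. pmf (\<kappa> i t) (u i))"
  shows "(\<Sum>i<m. (tvd (map_pmf (\<lambda>\<omega>. (U \<omega> i, T \<omega>, Z \<omega>)) (cond_pmf Q E))
             (bind_pmf (map_pmf (\<lambda>\<omega>. (T \<omega>, Z \<omega>)) (cond_pmf Q E))
                (\<lambda>(t, z). map_pmf (\<lambda>u. (u, t, z)) (\<kappa> i t)))) ^ 2)
         \<le> ln (card Zs / measure_pmf.prob Q E)"
proof -
  define qE where "qE = measure_pmf.prob Q E"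
  define P where "P = cond_pmf Q E"
  define MTZ where "MTZ = map_pmf (\<lambda>\<omega>. (T \<omega>, Z \<omega>)) P"
  define pTZ where "pTZ t z = pmf MTZ (t, z)" for t z
  define pT where "pT t = measure_pmf.prob Q {\<omega>. T \<omega> = t}" for t
  define A where "A i = map_pmf (\<lambda>\<omega>. (U \<omega> i, T \<omega>, Z \<omega>)) P" for i
  define B where "B i = bind_pmf MTZ (\<lambda>(t, z). map_pmf (\<lambda>u. (u, t, z)) (\<kappa> i t))" for i
  define a where "a i v = pmf (A i) v" for i v
  define b where "b i v = pmf (B i) v" for i v
  define V where "V i \<omega> = (U \<omega> i, T \<omega>, Z \<omega>)" for i \<omega>
  define r where "r i \<omega> = a i (V i \<omega>) / b i (V i \<omega>)" for i \<omega>
  define q where "q \<omega> = pTZ (T \<omega>) (Z \<omega>) * qE / pT (T \<omega>)" for \<omega>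
  define g where "g \<omega> = (\<Prod>i<m. r i \<omega>) * q \<omega>" for \<omega>
  define L where "L i \<omega> = ln (r i \<omega>)" for i \<omega>
  define C where "C = real (card Zs) / qE"
  have qE0: "qE > 0" using QE by (simp add: qE_def)
  have qE1: "qE \<le> 1" by (simp add: qE_def)
  have measP: "measure_pmf.prob P S = measure_pmf.prob Q (S \<inter> E) / qE" for S
    unfolding P_def qE_def by (rule measure_cond_pmf[OF QE])
  have setP: "set_pmf P = set_pmf Q \<inter> E"
  proof -
    have "set_pmf Q \<inter> E \<noteq> {}" using QE measure_pmf_zero_iff[of Q E] by auto
    thus ?thesis unfolding P_def by simp
  qed
  have bpmf: "b i (u, t, z) = pTZ t z * pmf (\<kappa> i t) u" for i u t z
  proof -
    have "B i = bind_pmf MTZ (\<lambda>x. map_pmf (\<lambda>u. (u, fst x, snd x)) (\<kappa> i (fst x)))"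
      unfolding B_def by (simp add: case_prod_unfold)
    hence "b i (u, t, z) = pmf (bind_pmf MTZ (\<lambda>x. map_pmf (\<lambda>u. (u, fst x, snd x)) (\<kappa> i (fst x)))) ((\<lambda>x u. (u, fst x, snd x)) (t,z) u)"
      by (simp add: b_def)
    also have "\<dots> = pmf MTZ (t, z) * pmf (\<kappa> i t) u"
      by (subst pmf_bind_inj) auto
    finally show ?thesis by (simp add: pTZ_def)
  qed
  have supp: "\<omega> \<in> set_pmf Q" "\<omega> \<in> E" if "\<omega> \<in> set_pmf P" for \<omega> using that setP by auto
  have pTZpos: "pTZ (T \<omega>) (Z \<omega>) > 0" if "\<omega> \<in> set_pmf P" for \<omega>
    unfolding pTZ_def MTZ_def pmf_map by (rule pmf_pos_mono(2)[OF that]) simp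
  have apos: "a i (V i \<omega>) > 0" if "\<omega> \<in> set_pmf P" for i \<omega>
    unfolding a_def A_def pmf_map V_def by (rule pmf_pos_mono(2)[OF that]) simp
  have pTpos: "pT (T \<omega>) > 0" if "\<omega> \<in> set_pmf P" for \<omega>
    unfolding pT_def by (rule pmf_pos_mono(2)[OF supp(1)[OF that]]) simp
  have kpos: "pmf (\<kappa> i (T \<omega>)) (U \<omega> i) > 0" if "\<omega> \<in> set_pmf P" "i < m" for i \<omega>
  proof -
    have "0 < measure_pmf.prob Q {\<omega>'. T \<omega>' = T \<omega> \<and> U \<omega>' = U \<omega>}"
      by (rule pmf_pos_mono(2)[OF supp(1)[OF that(1)]]) simp
    also have "\<dots> \<le> pT (T \<omega>) * (\<Prod>j<m. pmf (\<kappa> j (T \<omega>)) (U \<omega> j))" unfolding pT_def by (rule CI)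
    finally have "0 < pT (T \<omega>) * (\<Prod>j<m. pmf (\<kappa> j (T \<omega>)) (U \<omega> j))" .
    hence "(\<Prod>j<m. pmf (\<kappa> j (T \<omega>)) (U \<omega> j)) \<noteq> 0" by (metis mult_zero_right order_less_irrefl)
    hence "pmf (\<kappa> i (T \<omega>)) (U \<omega> i) \<noteq> 0" using that(2) by auto
    thus ?thesis using pmf_nonneg[of "\<kappa> i (T \<omega>)" "U \<omega> i"] by linarith
  qed
  have bpos: "b i (V i \<omega>) > 0" if "\<omega> \<in> set_pmf P" "i < m" for i \<omega>
    using pTZpos[OF that(1)] kpos[OF that] by (simp add: V_def bpmf)
  have rpos: "r i \<omega> > 0" if "\<omega> \<in> set_pmf P" "i < m" for i \<omega>
    using apos[OF that(1)] bpos[OF that] by (simp add: r_def)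
  have pTZle: "pTZ t z * qE \<le> pT t" for t z
  proof -
    have "pTZ t z = measure_pmf.prob Q ({\<omega>. (T \<omega>, Z \<omega>) = (t, z)} \<inter> E) / qE"
      unfolding pTZ_def MTZ_def pmf_map by (subst measP) (simp add: vimage_def)
    moreover have "measure_pmf.prob Q ({\<omega>. (T \<omega>, Z \<omega>) = (t, z)} \<inter> E) \<le> pT t"
      unfolding pT_def by (intro measure_pmf.finite_measure_mono) auto
    ultimately show ?thesis using qE0 by simp
  qed
  have qpos: "q \<omega> > 0" and qle: "q \<omega> \<le> 1" if "\<omega> \<in> set_pmf P" for \<omega>
    using pTZpos[OF that] pTpos[OF that] qE0 pTZle[of "T \<omega>" "Z \<omega>"] by (auto simp: q_def)
  have gpos: "g \<omega> > 0" if "\<omega> \<in> set_pmf P" for \<omega>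
  proof -
    have "(\<Prod>i<m. r i \<omega>) > 0" using rpos[OF that] by (auto intro!: prod_pos)
    thus ?thesis using qpos[OF that] by (simp add: g_def)
  qed
  have I3: "(\<integral>\<^sup>+\<omega>. ennreal (1 / r i \<omega>) \<partial>P) \<le> 1" for i
  proof -
    have "(\<integral>\<^sup>+\<omega>. ennreal (1 / r i \<omega>) \<partial>P) = (\<integral>\<^sup>+v. ennreal (b i v / a i v) \<partial>A i)"
      by (simp add: A_def r_def V_def)
    also have "\<dots> = (\<integral>\<^sup>+v. ennreal (a i v) * ennreal (b i v / a i v) \<partial>count_space UNIV)"
      by (simp add: nn_integral_measure_pmf a_def)
    also have "\<dots> \<le> (\<integral>\<^sup>+v. ennreal (pmf (B i) v) \<partial>count_space UNIV)"
    proof (rule nn_integral_mono)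
      fix v
      have "a i v * (b i v / a i v) \<le> b i v"
        by (cases "a i v = 0") (auto simp: b_def)
      thus "ennreal (a i v) * ennreal (b i v / a i v) \<le> ennreal (pmf (B i) v)"
        by (simp add: a_def b_def flip: ennreal_mult)
    qed
    also have "\<dots> = 1" by (rule nn_integral_pmf_1)
    finally show ?thesis .
  qed
  obtain \<omega>0 where w0: "\<omega>0 \<in> set_pmf P" using set_pmf_not_empty[of P] by blast
  have Zsne: "Zs \<noteq> {}" using Zs(2)[OF supp[OF w0]] by auto
  have cardZ: "card Zs > 0" using Zs(1) Zsne by (simp add: card_gt_0_iff)
  have C1: "C \<ge> 1" using cardZ qE0 qE1 unfolding C_def
    by (simp add: divide_le_eq_1)
  have I2: "(\<integral>\<^sup>+\<omega>. ennreal (1 / q \<omega>) \<partial>P) \<le> ennreal C"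
  proof -
    have "(\<integral>\<^sup>+\<omega>. ennreal (1 / q \<omega>) \<partial>P) = (\<integral>\<^sup>+x. ennreal (pT (fst x) / (pTZ (fst x) (snd x) * qE)) \<partial>MTZ)"
      unfolding MTZ_def nn_integral_map_pmf by (rule nn_integral_cong) (simp add: q_def)
    also have "\<dots> = (\<integral>\<^sup>+x. ennreal (pmf MTZ x) * ennreal (pT (fst x) / (pTZ (fst x) (snd x) * qE)) \<partial>count_space UNIV)"
      by (rule nn_integral_measure_pmf)
    also have "\<dots> \<le> (\<integral>\<^sup>+x. ennreal C * ennreal (pmf (pair_pmf (map_pmf T Q) (pmf_of_set Zs)) x) \<partial>count_space UNIV)"
    proof (rule nn_integral_mono)
      fix x :: "'t \<times> 'z"
      obtain t z where x: "x = (t, z)" by (cases x)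
      show "ennreal (pmf MTZ x) * ennreal (pT (fst x) / (pTZ (fst x) (snd x) * qE))
            \<le> ennreal C * ennreal (pmf (pair_pmf (map_pmf T Q) (pmf_of_set Zs)) x)"
      proof (cases "pmf MTZ x = 0")
        case True thus ?thesis by simp
      next
        case False
        hence "x \<in> set_pmf MTZ" by (simp add: set_pmf_eq)
        then obtain \<omega> where w: "\<omega> \<in> set_pmf P" "x = (T \<omega>, Z \<omega>)" unfolding MTZ_def by auto
        have zZ: "z \<in> Zs" using Zs(2)[OF supp[OF w(1)]] w(2) x by simp
        have p1: "pTZ t z > 0" using pTZpos[OF w(1)] w(2) x by simp
        have p2: "pmf (map_pmf T Q) t = pT t" by (simp add: pmf_map pT_def vimage_def)
        have "pmf MTZ x * (pT (fst x) / (pTZ (fst x) (snd x) * qE)) = pT t / qE"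
          using p1 x by (simp add: pTZ_def)
        also have "\<dots> = C * pmf (pair_pmf (map_pmf T Q) (pmf_of_set Zs)) x"
          using x zZ Zs(1) Zsne cardZ by (simp add: pmf_pair p2 C_def)
        finally have eq: "pmf MTZ x * (pT (fst x) / (pTZ (fst x) (snd x) * qE)) = C * pmf (pair_pmf (map_pmf T Q) (pmf_of_set Zs)) x" .
        have "ennreal (pmf MTZ x) * ennreal (pT (fst x) / (pTZ (fst x) (snd x) * qE))
             = ennreal (pmf MTZ x * (pT (fst x) / (pTZ (fst x) (snd x) * qE)))"
          by (rule ennreal_mult'[symmetric]) simp
        also have "\<dots> = ennreal C * ennreal (pmf (pair_pmf (map_pmf T Q) (pmf_of_set Zs)) x)"
          unfolding eq using C1 by (simp add: ennreal_mult')
        finally show ?thesis by simp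
      qed
    qed
    also have "\<dots> = ennreal C" by (simp add: nn_integral_cmult nn_integral_pmf_1)
    finally show ?thesis .
  qed
  have I1: "(\<integral>\<^sup>+\<omega>. ennreal (g \<omega>) \<partial>P) \<le> 1"
  proof -
    define MV where "MV = map_pmf (\<lambda>\<omega>. (T \<omega>, Z \<omega>, U \<omega>)) P"
    define Pk where "Pk t z = Pi_pmf {..<m} undefined (\<lambda>i. cond_distr P (\<lambda>\<omega>. U \<omega> i) (\<lambda>\<omega>. (T \<omega>, Z \<omega>)) (t, z))" for t z
    define Bnd where "Bnd = bind_pmf MTZ (\<lambda>x. map_pmf (\<lambda>u. (fst x, snd x, u)) (Pk (fst x) (snd x)))"
    define G where "G x = (\<Prod>i<m. a i (snd (snd x) i, fst x, fst (snd x)) / (pTZ (fst x) (fst (snd x)) * pmf (\<kappa> i (fst x)) (snd (snd x) i))) * (pTZ (fst x) (fst (snd x)) * qE / pT (fst x))" for x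
    have gG: "g \<omega> = G (T \<omega>, Z \<omega>, U \<omega>)" for \<omega>
      by (simp add: g_def G_def r_def V_def bpmf q_def)
    have G0: "G x \<ge> 0" for x
      using qE0 by (auto simp: G_def a_def pTZ_def pT_def intro!: prod_nonneg mult_nonneg_nonneg divide_nonneg_nonneg)
    have "(\<integral>\<^sup>+\<omega>. ennreal (g \<omega>) \<partial>P) = (\<integral>\<^sup>+x. ennreal (G x) \<partial>MV)" unfolding MV_def by (simp add: gG)
    also have "\<dots> = (\<integral>\<^sup>+x. ennreal (pmf MV x) * ennreal (G x) \<partial>count_space UNIV)"
      by (rule nn_integral_measure_pmf)
    also have "\<dots> \<le> (\<integral>\<^sup>+x. ennreal (pmf Bnd x) \<partial>count_space UNIV)"
    proof (rule nn_integral_mono)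
      fix x :: "'t \<times> 'z \<times> (nat \<Rightarrow> 'u)"
      obtain t z u where x: "x = (t, z, u)" by (cases x) auto
      show "ennreal (pmf MV x) * ennreal (G x) \<le> ennreal (pmf Bnd x)"
      proof (cases "pmf MV x = 0")
        case True thus ?thesis by simp
      next
        case False
        hence "x \<in> set_pmf MV" by (simp add: set_pmf_eq)
        then obtain \<omega> where w: "\<omega> \<in> set_pmf P" "x = (T \<omega>, Z \<omega>, U \<omega>)" unfolding MV_def by auto
        have tw: "t = T \<omega>" "z = Z \<omega>" "u = U \<omega>" using w(2) x by auto
        have uext: "\<And>i. i \<notin> {..<m} \<Longrightarrow> u i = undefined" using ext tw by auto
        have pT0: "pT t > 0" using pTpos[OF w(1)] tw by simp
        have pTZ0: "pTZ t z > 0" using pTZpos[OF w(1)] tw by simp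
        have k0: "pmf (\<kappa> i t) (u i) > 0" if "i < m" for i using kpos[OF w(1) that] tw by simp
        have hm: "pmf MV x \<le> pT t * (\<Prod>i<m. pmf (\<kappa> i t) (u i)) / qE"
        proof -
          have "pmf MV x = measure_pmf.prob Q ({\<omega>'. (T \<omega>', Z \<omega>', U \<omega>') = x} \<inter> E) / qE"
            unfolding MV_def pmf_map by (subst measP) (simp add: vimage_def)
          also have "\<dots> \<le> measure_pmf.prob Q {\<omega>'. T \<omega>' = t \<and> U \<omega>' = u} / qE"
            using qE0 x by (intro divide_right_mono measure_pmf.finite_measure_mono) auto
          also have "\<dots> \<le> pT t * (\<Prod>i<m. pmf (\<kappa> i t) (u i)) / qE"
            using qE0 unfolding pT_def by (intro divide_right_mono CI) auto
          finally show ?thesis .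
        qed
        have cd: "pmf (cond_distr P (\<lambda>\<omega>. U \<omega> i) (\<lambda>\<omega>. (T \<omega>, Z \<omega>)) (t, z)) (u i) = a i (u i, t, z) / pTZ t z" for i
        proof -
          have mS: "measure_pmf.prob P {\<omega>. T \<omega> = t \<and> Z \<omega> = z} = pTZ t z"
            by (simp add: pTZ_def MTZ_def pmf_map vimage_def)
          have "pmf (cond_distr P (\<lambda>\<omega>. U \<omega> i) (\<lambda>\<omega>. (T \<omega>, Z \<omega>)) (t, z)) (u i)
                = measure_pmf.prob (cond_pmf P {\<omega>. (T \<omega>, Z \<omega>) = (t, z)}) ((\<lambda>\<omega>. U \<omega> i) -` {u i})"
            by (simp add: cond_distr_def pmf_map)
          also have "\<dots> = measure_pmf.prob P ((\<lambda>\<omega>. U \<omega> i) -` {u i} \<inter> {\<omega>. (T \<omega>, Z \<omega>) = (t, z)}) / pTZ t z"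
            using pTZ0 by (subst measure_cond_pmf) (auto simp: mS)
          also have "(\<lambda>\<omega>. U \<omega> i) -` {u i} \<inter> {\<omega>. (T \<omega>, Z \<omega>) = (t, z)} = (\<lambda>\<omega>. (U \<omega> i, T \<omega>, Z \<omega>)) -` {(u i, t, z)}"
            by auto
          finally show ?thesis by (simp add: a_def A_def pmf_map)
        qed
        have pB: "pmf Bnd x = pTZ t z * (\<Prod>i<m. a i (u i, t, z) / pTZ t z)"
        proof -
          have "pmf Bnd x = pmf Bnd ((\<lambda>x u. (fst x, snd x, u)) (t, z) u)" using x by simp
          also have "\<dots> = pmf MTZ (t, z) * pmf (Pk t z) u"
            unfolding Bnd_def by (subst pmf_bind_inj) auto
          also have "pmf (Pk t z) u = (\<Prod>i<m. a i (u i, t, z) / pTZ t z)"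
            unfolding Pk_def using uext by (simp add: pmf_Pi cd)
          finally show ?thesis by (simp add: pTZ_def)
        qed
        have "pmf MV x * G x \<le> pT t * (\<Prod>i<m. pmf (\<kappa> i t) (u i)) / qE * G x"
          using hm G0 by (intro mult_right_mono) auto
        also have "\<dots> = (\<Prod>i<m. pmf (\<kappa> i t) (u i)) * (\<Prod>i<m. a i (u i, t, z) / (pTZ t z * pmf (\<kappa> i t) (u i))) * pTZ t z"
          using pT0 qE0 by (simp add: G_def x)
        also have "(\<Prod>i<m. pmf (\<kappa> i t) (u i)) * (\<Prod>i<m. a i (u i, t, z) / (pTZ t z * pmf (\<kappa> i t) (u i)))
                   = (\<Prod>i<m. a i (u i, t, z) / pTZ t z)"
          unfolding prod.distrib[symmetric]
        proof (rule prod.cong)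
          fix i assume "i \<in> {..<m}"
          thus "pmf (\<kappa> i t) (u i) * (a i (u i, t, z) / (pTZ t z * pmf (\<kappa> i t) (u i))) = a i (u i, t, z) / pTZ t z"
            using k0[of i] by simp
        qed simp
        also have "(\<Prod>i<m. a i (u i, t, z) / pTZ t z) * pTZ t z = pmf Bnd x"
          unfolding pB by simp
        finally have "pmf MV x * G x \<le> pmf Bnd x" .
        thus ?thesis by (simp flip: ennreal_mult')
      qed
    qed
    also have "\<dots> = 1" by (rule nn_integral_pmf_1)
    finally show ?thesis .
  qed
  have AEg: "AE \<omega> in P. 0 \<le> g \<omega>" by (rule AE_pmfI) (simp add: gpos less_imp_le)
  have AEq: "AE \<omega> in P. 0 \<le> 1 / q \<omega>" by (rule AE_pmfI) (simp add: qpos less_imp_le)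
  have AEr: "AE \<omega> in P. 0 \<le> 1 / r i \<omega>" if "i < m" for i
    by (rule AE_pmfI) (simp add: rpos[OF _ that] less_imp_le)
  have I1': "(\<integral>\<^sup>+\<omega>. ennreal (g \<omega>) \<partial>P) \<le> ennreal 1" using I1 by simp
  have I3': "(\<integral>\<^sup>+\<omega>. ennreal (1 / r i \<omega>) \<partial>P) \<le> ennreal 1" for i using I3[of i] by simp
  have intg: "integrable P g" and Eg: "(\<integral>\<omega>. g \<omega> \<partial>P) \<le> 1"
    using integral_le_from_nn[OF AEg I1'] by auto
  have intq: "integrable P (\<lambda>\<omega>. 1 / q \<omega>)" and Eq: "(\<integral>\<omega>. 1 / q \<omega> \<partial>P) \<le> C"
    using integral_le_from_nn[OF AEq I2] C1 by auto
  have intr: "integrable P (\<lambda>\<omega>. 1 / r i \<omega>)" if "i < m" for i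
    using integral_le_from_nn[OF AEr[OF that] I3'] by auto
  have lnC: "ln C \<ge> 0" using C1 by simp
  have Lneg: "- L i \<omega> \<le> 1 / r i \<omega>" if "\<omega> \<in> set_pmf P" "i < m" for i \<omega>
  proof -
    have "ln (1 / r i \<omega>) \<le> 1 / r i \<omega> - 1" using rpos[OF that] by (intro ln_le_minus_one) simp
    moreover have "ln (1 / r i \<omega>) = - L i \<omega>" using rpos[OF that] by (simp add: L_def ln_div)
    ultimately show ?thesis by simp
  qed
  have Lsum: "(\<Sum>i<m. L i \<omega>) \<le> g \<omega> + (1 / q \<omega>) / C + ln C - 2" if w: "\<omega> \<in> set_pmf P" for \<omega>
  proof -
    have pr: "(\<Prod>i<m. r i \<omega>) > 0" using rpos[OF w] by (auto intro!: prod_pos)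
    have "(\<Sum>i<m. L i \<omega>) = ln (\<Prod>i<m. r i \<omega>)"
      unfolding L_def using rpos[OF w] by (subst ln_prod) (auto dest: less_imp_neq[symmetric])
    also have "\<dots> = ln (g \<omega>) - ln (q \<omega>)"
    proof -
      have "ln (g \<omega>) = ln (\<Prod>i<m. r i \<omega>) + ln (q \<omega>)"
        unfolding g_def using pr qpos[OF w] by (rule ln_mult_pos)
      thus ?thesis by simp
    qed
    finally have e: "(\<Sum>i<m. L i \<omega>) = ln (g \<omega>) - ln (q \<omega>)" .
    have l1: "ln (g \<omega>) \<le> g \<omega> - 1" using gpos[OF w] by (rule ln_le_minus_one)
    have l2: "- ln (q \<omega>) \<le> ln C + (1 / q \<omega>) / C - 1"
    proof -
      have "ln ((1 / q \<omega>) / C) \<le> (1 / q \<omega>) / C - 1" using qpos[OF w] C1 by (intro ln_le_minus_one) simp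
      moreover have "ln ((1 / q \<omega>) / C) = - ln (q \<omega>) - ln C" using qpos[OF w] C1 by (simp add: ln_div ln_mult_pos)
      ultimately show ?thesis by simp
    qed
    show ?thesis using e l1 l2 by linarith
  qed
  define H where "H \<omega> = g \<omega> + (1 / q \<omega>) / C + ln C + 2 * (\<Sum>j<m. 1 / r j \<omega>)" for \<omega>
  have intH: "integrable P H"
  proof -
    have i1: "integrable P (\<lambda>\<omega>. (1 / q \<omega>) / C)" using intq by (rule integrable_divide)
    have i2: "integrable P (\<lambda>\<omega>. 2 * (\<Sum>j<m. 1 / r j \<omega>))"
      by (rule integrable_mult_right, rule Bochner_Integration.integrable_sum) (rule intr, simp)
    have i3: "integrable P (\<lambda>\<omega>. ln C)" by simp
    show ?thesis unfolding H_def
      by (rule Bochner_Integration.integrable_add[OF Bochner_Integration.integrable_add[OF Bochner_Integration.integrable_add[OF intg i1] i3] i2])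
  qed
  have Lbound: "\<bar>L i \<omega>\<bar> \<le> H \<omega>" if w: "\<omega> \<in> set_pmf P" and i: "i < m" for i \<omega>
  proof -
    have rnn: "1 / r j \<omega> \<ge> 0" if "j < m" for j using rpos[OF w that] by simp
    have sr: "(\<Sum>j<m. 1 / r j \<omega>) \<ge> 0" using rnn by (auto intro!: sum_nonneg)
    have ri: "1 / r i \<omega> \<le> (\<Sum>j<m. 1 / r j \<omega>)"
      using i rnn by (intro member_le_sum) auto
    have "(\<Sum>j<m. L j \<omega>) = L i \<omega> + (\<Sum>j\<in>{..<m} - {i}. L j \<omega>)"
      using i by (subst sum.remove[of "{..<m}" i]) auto
    moreover have "- (\<Sum>j\<in>{..<m} - {i}. L j \<omega>) \<le> (\<Sum>j\<in>{..<m} - {i}. 1 / r j \<omega>)"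
      unfolding sum_negf[symmetric] by (intro sum_mono Lneg[OF w]) auto
    moreover have "(\<Sum>j\<in>{..<m} - {i}. 1 / r j \<omega>) \<le> (\<Sum>j<m. 1 / r j \<omega>)"
      using rnn by (intro sum_mono2) auto
    ultimately have up: "L i \<omega> \<le> g \<omega> + (1 / q \<omega>) / C + ln C - 2 + (\<Sum>j<m. 1 / r j \<omega>)"
      using Lsum[OF w] by linarith
    have lo: "- L i \<omega> \<le> (\<Sum>j<m. 1 / r j \<omega>)" using Lneg[OF w i] ri by linarith
    have "0 \<le> g \<omega>" "0 \<le> (1 / q \<omega>) / C" using gpos[OF w] qpos[OF w] C1 by auto
    thus ?thesis using up lo lnC sr unfolding H_def by linarith
  qed
  have intL: "integrable P (L i)" if i: "i < m" for i
    by (rule Bochner_Integration.integrable_bound[OF intH]) (auto intro!: AE_pmfI order_trans[OF Lbound[OF _ i]])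
  have tvi: "(tvd (A i) (B i))\<^sup>2 \<le> (\<integral>\<omega>. L i \<omega> \<partial>P)" if i: "i < m" for i
  proof -
    define F where "F v = ln (pmf (A i) v / pmf (B i) v)" for v
    have Aeq: "A i = map_pmf (V i) P" unfolding A_def V_def by (rule refl)
    have FL: "(\<lambda>\<omega>. F (V i \<omega>)) = L i" by (simp add: fun_eq_iff F_def L_def r_def a_def b_def)
    have "(tvd (A i) (B i))\<^sup>2 \<le> (\<integral>v. F v \<partial>A i)"
      unfolding F_def
    proof (rule pinsker_lite)
      fix v assume "v \<in> set_pmf (A i)"
      then obtain \<omega> where w: "\<omega> \<in> set_pmf P" "v = V i \<omega>" unfolding A_def V_def by auto
      show "pmf (B i) v > 0" using bpos[OF w(1) i] w(2) by (simp add: b_def)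
    next
      have "integrable (map_pmf (V i) P) F" using intL[OF i] by (simp add: FL)
      thus "integrable (A i) (\<lambda>v. ln (pmf (A i) v / pmf (B i) v))"
        by (simp add: Aeq[symmetric] F_def[abs_def])
    qed
    also have "(\<integral>v. F v \<partial>A i) = (\<integral>\<omega>. L i \<omega> \<partial>P)"
      unfolding Aeq integral_map_pmf FL ..
    finally show ?thesis .
  qed
  have "(\<Sum>i<m. (tvd (A i) (B i))\<^sup>2) \<le> (\<Sum>i<m. (\<integral>\<omega>. L i \<omega> \<partial>P))"
    by (intro sum_mono tvi) auto
  also have "\<dots> = (\<integral>\<omega>. (\<Sum>i<m. L i \<omega>) \<partial>P)"
    by (rule Bochner_Integration.integral_sum[symmetric]) (rule intL, simp)
  also have "\<dots> \<le> (\<integral>\<omega>. g \<omega> + (1 / q \<omega>) / C + ln C - 2 \<partial>P)"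
  proof -
    have iS: "integrable P (\<lambda>\<omega>. \<Sum>i<m. L i \<omega>)"
      by (rule Bochner_Integration.integrable_sum) (rule intL, simp)
    have i1: "integrable P (\<lambda>\<omega>. (1 / q \<omega>) / C)" using intq by (rule integrable_divide)
    have iG: "integrable P (\<lambda>\<omega>. g \<omega> + (1 / q \<omega>) / C + ln C - 2)"
      by (rule Bochner_Integration.integrable_diff[OF Bochner_Integration.integrable_add[OF Bochner_Integration.integrable_add[OF intg i1]]]) simp_all
    show ?thesis by (rule integral_mono_AE[OF iS iG]) (rule AE_pmfI, rule Lsum)
  qed
  also have "\<dots> = (\<integral>\<omega>. g \<omega> \<partial>P) + (\<integral>\<omega>. 1 / q \<omega> \<partial>P) / C + ln C - 2"
  proof -
    have i1: "integrable P (\<lambda>\<omega>. (1 / q \<omega>) / C)" using intq by (rule integrable_divide)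
    have i1': "integrable P (\<lambda>x. 1 / (q x * C))" using i1 by simp
    have "(\<integral>\<omega>. g \<omega> + (1 / q \<omega>) / C + ln C - 2 \<partial>P) = (\<integral>\<omega>. g \<omega> + (1 / q \<omega>) / C + ln C \<partial>P) - 2"
      by (subst Bochner_Integration.integral_diff) (auto intro!: Bochner_Integration.integrable_add intg i1 i1')
    also have "(\<integral>\<omega>. g \<omega> + (1 / q \<omega>) / C + ln C \<partial>P) = (\<integral>\<omega>. g \<omega> + (1 / q \<omega>) / C \<partial>P) + ln C"
      by (subst Bochner_Integration.integral_add) (auto intro!: Bochner_Integration.integrable_add intg i1 i1')
    also have "(\<integral>\<omega>. g \<omega> + (1 / q \<omega>) / C \<partial>P) = (\<integral>\<omega>. g \<omega> \<partial>P) + (\<integral>\<omega>. (1 / q \<omega>) / C \<partial>P)"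
      by (rule Bochner_Integration.integral_add[OF intg i1])
    also have "(\<integral>\<omega>. (1 / q \<omega>) / C \<partial>P) = (\<integral>\<omega>. 1 / q \<omega> \<partial>P) / C"
      by (rule integral_divide_zero)
    finally show ?thesis .
  qed
  also have "\<dots> \<le> 1 + C / C + ln C - 2"
    using Eg Eq C1 by (intro add_mono diff_mono divide_right_mono) auto
  also have "\<dots> = ln C" using C1 by simp
  finally show ?thesis unfolding A_def B_def MTZ_def P_def C_def qE_def .
qed

lemma measure_pair_pmf_prod:
  "measure_pmf.prob (pair_pmf M N) {\<omega>. fst \<omega> \<in> S1 \<and> snd \<omega> \<in> S2} = measure_pmf.prob M S1 * measure_pmf.prob N S2"
proof -
  have "measure_pmf.prob (pair_pmf M N) {\<omega>. fst \<omega> \<in> S1 \<and> snd \<omega> \<in> S2}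
      = measure_pmf.prob (pair_pmf M N) ({\<omega>. fst \<omega> \<in> S1 \<and> snd \<omega> \<in> S2} \<inter> set_pmf (pair_pmf M N))"
    by (rule measure_Int_set_pmf[symmetric])
  also have "{\<omega>. fst \<omega> \<in> S1 \<and> snd \<omega> \<in> S2} \<inter> set_pmf (pair_pmf M N) = (S1 \<inter> set_pmf M) \<times> (S2 \<inter> set_pmf N)"
    by auto
  also have "measure_pmf.prob (pair_pmf M N) \<dots> = measure_pmf.prob M (S1 \<inter> set_pmf M) * measure_pmf.prob N (S2 \<inter> set_pmf N)"
    by (rule measure_pmf_prob_product) (auto intro: countable_subset)
  also have "\<dots> = measure_pmf.prob M S1 * measure_pmf.prob N S2" by (simp add: measure_Int_set_pmf)
  finally show ?thesis .
qed

lemma measure_Pi_pmf_all: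
  assumes fin: "finite A"
  shows "measure_pmf.prob (Pi_pmf A dflt p) {f. \<forall>i. f i \<in> B i}
     = (if (\<forall>i. i \<notin> A \<longrightarrow> dflt \<in> B i) then (\<Prod>i\<in>A. measure_pmf.prob (p i) (B i)) else 0)"
proof (cases "\<forall>i. i \<notin> A \<longrightarrow> dflt \<in> B i")
  case True
  have "measure_pmf.prob (Pi_pmf A dflt p) {f. \<forall>i. f i \<in> B i}
      = measure_pmf.prob (Pi_pmf A dflt p) ({f. \<forall>i. f i \<in> B i} \<inter> set_pmf (Pi_pmf A dflt p))"
    by (rule measure_Int_set_pmf[symmetric])
  also have "{f. \<forall>i. f i \<in> B i} \<inter> set_pmf (Pi_pmf A dflt p) = Pi A B \<inter> set_pmf (Pi_pmf A dflt p)"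
  proof (intro equalityI subsetI)
    fix x assume x: "x \<in> Pi A B \<inter> set_pmf (Pi_pmf A dflt p)"
    have "x i \<in> B i" for i
    proof (cases "i \<in> A")
      case True thus ?thesis using x by auto
    next
      case False
      hence "x i = dflt" using x set_Pi_pmf_subset[OF fin, of dflt p] by auto
      thus ?thesis using False \<open>\<forall>i. i \<notin> A \<longrightarrow> dflt \<in> B i\<close> by simp
    qed
    thus "x \<in> {f. \<forall>i. f i \<in> B i} \<inter> set_pmf (Pi_pmf A dflt p)" using x by auto
  qed auto
  also have "measure_pmf.prob (Pi_pmf A dflt p) \<dots> = measure_pmf.prob (Pi_pmf A dflt p) (Pi A B)"
    by (rule measure_Int_set_pmf)
  also have "\<dots> = (\<Prod>i\<in>A. measure_pmf.prob (p i) (B i))" by (rule measure_Pi_pmf_Pi[OF fin])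
  finally show ?thesis using True by simp
next
  case False
  have "measure_pmf.prob (Pi_pmf A dflt p) {f. \<forall>i. f i \<in> B i}
      = measure_pmf.prob (Pi_pmf A dflt p) ({f. \<forall>i. f i \<in> B i} \<inter> set_pmf (Pi_pmf A dflt p))"
    by (rule measure_Int_set_pmf[symmetric])
  also have "{f. \<forall>i. f i \<in> B i} \<inter> set_pmf (Pi_pmf A dflt p) = {}"
  proof -
    from False obtain i where i: "i \<notin> A" "dflt \<notin> B i" by auto
    have "\<forall>x \<in> set_pmf (Pi_pmf A dflt p). x i = dflt" using set_Pi_pmf_subset[OF fin, of dflt p] i(1) by auto
    thus ?thesis using i(2) by auto
  qed
  finally have "measure_pmf.prob (Pi_pmf A dflt p) {f. \<forall>i. f i \<in> B i} = 0" by simp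
  moreover have "(if (\<forall>i. i \<notin> A \<longrightarrow> dflt \<in> B i) then (\<Prod>i\<in>A. measure_pmf.prob (p i) (B i)) else 0) = 0"
    using False by (rule if_not_P)
  ultimately show ?thesis by simp
qed

lemma measure_sample_prod:
  fixes \<mu> :: "'a pmf" and \<rho> :: "'b pmf" and n m :: nat
  assumes "m \<le> n"
  shows "measure_pmf.prob (pair_pmf (Pi_pmf {..<n} undefined (\<lambda>_. \<mu>)) (Pi_pmf {..<m} undefined (\<lambda>_. \<rho>)))
            {\<omega>. (\<forall>i. fst \<omega> i \<in> B1 i) \<and> (\<forall>i. snd \<omega> i \<in> B2 i)}
       = (if (\<forall>i. i \<ge> n \<longrightarrow> undefined \<in> B1 i) then (\<Prod>i<n. measure_pmf.prob \<mu> (B1 i)) else 0)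
         * (if (\<forall>i. i \<ge> m \<longrightarrow> undefined \<in> B2 i) then (\<Prod>i<m. measure_pmf.prob \<rho> (B2 i)) else 0)"
proof -
  have "{\<omega>. (\<forall>i. fst \<omega> i \<in> B1 i) \<and> (\<forall>i. snd \<omega> i \<in> B2 i)}
        = {\<omega>. fst \<omega> \<in> {f. \<forall>i. f i \<in> B1 i} \<and> snd \<omega> \<in> {f. \<forall>i. f i \<in> B2 i}}" by auto
  hence "measure_pmf.prob (pair_pmf (Pi_pmf {..<n} undefined (\<lambda>_. \<mu>)) (Pi_pmf {..<m} undefined (\<lambda>_. \<rho>)))
            {\<omega>. (\<forall>i. fst \<omega> i \<in> B1 i) \<and> (\<forall>i. snd \<omega> i \<in> B2 i)}
      = measure_pmf.prob (Pi_pmf {..<n} undefined (\<lambda>_. \<mu>)) {f. \<forall>i. f i \<in> B1 i}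
        * measure_pmf.prob (Pi_pmf {..<m} undefined (\<lambda>_. \<rho>)) {f. \<forall>i. f i \<in> B2 i}"
    by (simp only: measure_pair_pmf_prod)
  moreover have "measure_pmf.prob (Pi_pmf {..<n} undefined (\<lambda>_. \<mu>)) {f. \<forall>i. f i \<in> B1 i}
     = (if (\<forall>i. i \<ge> n \<longrightarrow> undefined \<in> B1 i) then (\<Prod>i<n. measure_pmf.prob \<mu> (B1 i)) else 0)"
    using measure_Pi_pmf_all[of "{..<n}" undefined "\<lambda>_. \<mu>" B1, OF finite_lessThan] by (simp add: not_less)
  moreover have "measure_pmf.prob (Pi_pmf {..<m} undefined (\<lambda>_. \<rho>)) {f. \<forall>i. f i \<in> B2 i}
     = (if (\<forall>i. i \<ge> m \<longrightarrow> undefined \<in> B2 i) then (\<Prod>i<m. measure_pmf.prob \<rho> (B2 i)) else 0)"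
    using measure_Pi_pmf_all[of "{..<m}" undefined "\<lambda>_. \<rho>" B2, OF finite_lessThan] by (simp add: not_less)
  ultimately show ?thesis by simp
qed

lemma CI_gen:
  fixes \<mu> :: "'a pmf" and \<rho> :: "'b pmf" and n m :: nat and T :: "(nat \<Rightarrow> 'a) \<times> (nat \<Rightarrow> 'b) \<Rightarrow> 't"
    and U :: "(nat \<Rightarrow> 'a) \<times> (nat \<Rightarrow> 'b) \<Rightarrow> nat \<Rightarrow> 'u" and \<kappa> :: "nat \<Rightarrow> 't \<Rightarrow> 'u pmf"
  assumes mn: "m \<le> n"
    and e1: "{\<omega>. T \<omega> = t \<and> U \<omega> = u} = {\<omega>. (\<forall>i. fst \<omega> i \<in> Ba i) \<and> (\<forall>i. snd \<omega> i \<in> Bb i)}"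
    and e2: "{\<omega>. T \<omega> = t} = {\<omega>. (\<forall>i. fst \<omega> i \<in> Ba' i) \<and> (\<forall>i. snd \<omega> i \<in> Bb' i)}"
    and sub: "\<And>i. Ba i \<subseteq> Ba' i" "\<And>i. Bb i \<subseteq> Bb' i"
    and per: "\<And>i. i < m \<Longrightarrow> measure_pmf.prob \<mu> (Ba i) * measure_pmf.prob \<rho> (Bb i)
                  \<le> measure_pmf.prob \<mu> (Ba' i) * measure_pmf.prob \<rho> (Bb' i) * pmf (\<kappa> i t) (u i)"
  shows "measure_pmf.prob (pair_pmf (Pi_pmf {..<n} undefined (\<lambda>_. \<mu>)) (Pi_pmf {..<m} undefined (\<lambda>_. \<rho>)))
             {\<omega>. T \<omega> = t \<and> U \<omega> = u}
         \<le> measure_pmf.prob (pair_pmf (Pi_pmf {..<n} undefined (\<lambda>_. \<mu>)) (Pi_pmf {..<m} undefined (\<lambda>_. \<rho>)))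
             {\<omega>. T \<omega> = t} * (\<Prod>i<m. pmf (\<kappa> i t) (u i))"
proof -
  let ?c1 = "\<forall>i. i \<ge> n \<longrightarrow> undefined \<in> Ba i" and ?c2 = "\<forall>i. i \<ge> m \<longrightarrow> undefined \<in> Bb i"
  have rhs0: "0 \<le> measure_pmf.prob (pair_pmf (Pi_pmf {..<n} undefined (\<lambda>_. \<mu>)) (Pi_pmf {..<m} undefined (\<lambda>_. \<rho>)))
             {\<omega>. T \<omega> = t} * (\<Prod>i<m. pmf (\<kappa> i t) (u i))"
    by (intro mult_nonneg_nonneg prod_nonneg) auto
  show ?thesis
  proof (cases "?c1 \<and> ?c2")
    case False
    hence "measure_pmf.prob (pair_pmf (Pi_pmf {..<n} undefined (\<lambda>_. \<mu>)) (Pi_pmf {..<m} undefined (\<lambda>_. \<rho>)))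
             {\<omega>. T \<omega> = t \<and> U \<omega> = u} = 0"
      unfolding e1 measure_sample_prod[OF mn] by auto
    thus ?thesis using rhs0 by simp
  next
    case True
    hence c': "\<forall>i. i \<ge> n \<longrightarrow> undefined \<in> Ba' i" "\<forall>i. i \<ge> m \<longrightarrow> undefined \<in> Bb' i"
      using sub by blast+
    have split: "{..<n} = {..<m} \<union> {m..<n}" using mn by auto
    have pn: "(\<Prod>i<n. h i) = (\<Prod>i<m. h i) * (\<Prod>i\<in>{m..<n}. h i)" for h :: "nat \<Rightarrow> real"
      unfolding split by (rule prod.union_disjoint) auto
    have "(\<Prod>i<n. measure_pmf.prob \<mu> (Ba i)) * (\<Prod>i<m. measure_pmf.prob \<rho> (Bb i))
        = (\<Prod>i<m. measure_pmf.prob \<mu> (Ba i) * measure_pmf.prob \<rho> (Bb i)) * (\<Prod>i\<in>{m..<n}. measure_pmf.prob \<mu> (Ba i))"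
      unfolding pn prod.distrib by (simp add: algebra_simps)
    also have "\<dots> \<le> (\<Prod>i<m. measure_pmf.prob \<mu> (Ba' i) * measure_pmf.prob \<rho> (Bb' i) * pmf (\<kappa> i t) (u i)) * (\<Prod>i\<in>{m..<n}. measure_pmf.prob \<mu> (Ba' i))"
      by (intro mult_mono prod_mono conjI per prod_nonneg measure_pmf.finite_measure_mono sub)
         (auto intro!: mult_nonneg_nonneg)
    also have "\<dots> = (\<Prod>i<n. measure_pmf.prob \<mu> (Ba' i)) * (\<Prod>i<m. measure_pmf.prob \<rho> (Bb' i)) * (\<Prod>i<m. pmf (\<kappa> i t) (u i))"
      unfolding pn prod.distrib by (simp add: algebra_simps)
    finally show ?thesis
      unfolding e1 e2 measure_sample_prod[OF mn] using True c' by simp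
  qed
qed

lemma pmf_cond_distr:
  assumes "measure_pmf.prob Q {w. G w = o'} > 0"
  shows "pmf (cond_distr Q F G o') v = measure_pmf.prob Q {w. F w = v \<and> G w = o'} / measure_pmf.prob Q {w. G w = o'}"
proof -
  have "pmf (cond_distr Q F G o') v = measure_pmf.prob (cond_pmf Q {w. G w = o'}) (F -` {v})"
    by (simp add: cond_distr_def pmf_map)
  also have "\<dots> = measure_pmf.prob Q (F -` {v} \<inter> {w. G w = o'}) / measure_pmf.prob Q {w. G w = o'}"
    by (rule measure_cond_pmf[OF assms])
  also have "F -` {v} \<inter> {w. G w = o'} = {w. F w = v \<and> G w = o'}" by auto
  finally show ?thesis .
qed

lemma per_aux:
  fixes X Y k :: real
  assumes "0 \<le> X" "X \<le> Y" "Y > 0 \<Longrightarrow> k = X / Y"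
  shows "X \<le> Y * k"
proof (cases "Y > 0")
  case True thus ?thesis using assms by simp
next
  case False
  hence "Y = 0" "X = 0" using assms by linarith+
  thus ?thesis by simp
qed

lemma sum_sq_le:
  fixes s :: "nat \<Rightarrow> real"
  shows "(\<Sum>i<m. s i)\<^sup>2 \<le> real m * (\<Sum>i<m. (s i)\<^sup>2)"
proof -
  have "(\<Sum>i<m. s i)\<^sup>2 = (\<Sum>i<m. \<Sum>j<m. s i * s j)"
    by (simp add: power2_eq_square sum_product)
  also have "\<dots> \<le> (\<Sum>i<m. \<Sum>j<m. ((s i)\<^sup>2 + (s j)\<^sup>2) / 2)"
  proof (intro sum_mono)
    fix i j
    have "0 \<le> (s i - s j)\<^sup>2" by simp
    thus "s i * s j \<le> ((s i)\<^sup>2 + (s j)\<^sup>2) / 2" by (simp add: power2_eq_square algebra_simps)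
  qed
  also have "\<dots> = real m * (\<Sum>i<m. (s i)\<^sup>2)"
    by (simp add: sum.distrib sum_divide_distrib[symmetric] add_divide_distrib sum_distrib_left)
  finally show ?thesis .
qed

definition Yf :: "nat \<Rightarrow> (nat \<Rightarrow> 'x set) \<Rightarrow> (nat \<Rightarrow> 'x) \<Rightarrow> (nat \<Rightarrow> 'x option)" where
  "Yf k Xp x = (\<lambda>t. if t < k then (if x t \<in> Xp t then None else Some (x t)) else None)"

lemma Yv_Yf: "Yv k Xp w i = Yf k Xp (fst w i)"
  by (simp add: Yv_def Yf_def)

lemma round_prob:
  fixes \<mu> :: "'a pmf" and \<rho> :: "'b pmf" and n m :: nat
  assumes "m \<le> n" "i < m"
  shows "measure_pmf.prob (pair_pmf (Pi_pmf {..<n} undefined (\<lambda>_. \<mu>)) (Pi_pmf {..<m} undefined (\<lambda>_. \<rho>)))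
           {\<omega>. fst \<omega> i \<in> S1 \<and> snd \<omega> i \<in> S2} = measure_pmf.prob \<mu> S1 * measure_pmf.prob \<rho> S2"
proof -
  have "{\<omega>. fst \<omega> i \<in> S1 \<and> snd \<omega> i \<in> S2 :: bool}
       = {\<omega>. (\<forall>j. fst \<omega> j \<in> (if j = i then S1 else UNIV)) \<and> (\<forall>j. snd \<omega> j \<in> (if j = i then S2 else UNIV))}"
    by auto
  moreover have "(\<Prod>j<n. measure_pmf.prob \<mu> (if j = i then S1 else UNIV)) = measure_pmf.prob \<mu> S1"
    using assms by (simp add: if_distrib prod.If_cases Int_absorb1 subset_iff)
  moreover have "(\<Prod>j<m. measure_pmf.prob \<rho> (if j = i then S2 else UNIV)) = measure_pmf.prob \<rho> S2"
    using assms by (simp add: if_distrib prod.If_cases Int_absorb1 subset_iff)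
  ultimately show ?thesis using assms by (simp add: measure_sample_prod)
qed

lemma sum_sq_mono:
  fixes s1 s2 :: "nat \<Rightarrow> real"
  assumes "\<And>i. i < m \<Longrightarrow> 0 \<le> s1 i" "\<And>i. i < m \<Longrightarrow> s1 i \<le> s2 i"
  shows "(\<Sum>i<m. (s1 i)\<^sup>2) \<le> (\<Sum>i<m. (s2 i)\<^sup>2)"
  using assms by (intro sum_mono power_mono) auto

lemma marg_round:
  fixes \<mu> :: "'a pmf" and \<rho> :: "'b pmf" and n m :: nat
  assumes "m \<le> n" "i < m"
  shows "map_pmf (\<lambda>w. (fst w i, snd w i)) (pair_pmf (Pi_pmf {..<n} undefined (\<lambda>_. \<mu>)) (Pi_pmf {..<m} undefined (\<lambda>_. \<rho>)))
         = pair_pmf \<mu> \<rho>"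
proof -
  have "map_pmf (\<lambda>w. (fst w i, snd w i)) (pair_pmf (Pi_pmf {..<n} undefined (\<lambda>_. \<mu>)) (Pi_pmf {..<m} undefined (\<lambda>_. \<rho>)))
      = map_pmf (\<lambda>(a, b). ((\<lambda>f. f i) a, (\<lambda>f. f i) b)) (pair_pmf (Pi_pmf {..<n} undefined (\<lambda>_. \<mu>)) (Pi_pmf {..<m} undefined (\<lambda>_. \<rho>)))"
    by (simp add: case_prod_unfold)
  also have "\<dots> = pair_pmf (map_pmf (\<lambda>f. f i) (Pi_pmf {..<n} undefined (\<lambda>_. \<mu>))) (map_pmf (\<lambda>f. f i) (Pi_pmf {..<m} undefined (\<lambda>_. \<rho>)))"
    by (rule map_pair)
  also have "\<dots> = pair_pmf \<mu> \<rho>" using assms by (simp add: Pi_pmf_component)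
  finally show ?thesis .
qed

lemma inst1:
  fixes \<mu> :: "(nat \<Rightarrow> 'x) pmf" and \<rho> :: "nat set pmf" and E :: "'x sample_pt set"
    and Z :: "'x sample_pt \<Rightarrow> 'z" and n m k :: nat and Xp :: "nat \<Rightarrow> 'x set"
  defines "Q \<equiv> pair_pmf (Pi_pmf {..<n} undefined (\<lambda>_. \<mu>)) (Pi_pmf {..<m} undefined (\<lambda>_. \<rho>))"
  assumes mn: "m \<le> n" and QE: "measure_pmf.prob Q E > 0"
    and Zs: "finite Zs" "\<And>\<omega>. \<omega> \<in> set_pmf Q \<Longrightarrow> \<omega> \<in> E \<Longrightarrow> Z \<omega> \<in> Zs"
  shows "(\<Sum>i<m. (tvd (map_pmf (\<lambda>w. (Xv w i, Yv k Xp w i, Omv k Xp m n w i)) (cond_pmf Q E))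
                      (map_pmf (\<lambda>w. (Xv w i, Yv k Xp w i, Omv k Xp m n w i)) Q))\<^sup>2)
         \<le> ln (card Zs / measure_pmf.prob Q E)"
proof -
  define U where "U \<omega> = (\<lambda>i. if i < m then (fst \<omega> i, snd \<omega> i) else undefined)" for \<omega> :: "'x sample_pt"
  define T where "T (\<omega> :: 'x sample_pt) = ()" for \<omega>
  define \<kappa> where "\<kappa> (i::nat) (t::unit) = pair_pmf \<mu> \<rho>" for i t
  have CI: "measure_pmf.prob Q {\<omega>. T \<omega> = t \<and> U \<omega> = u}
                 \<le> measure_pmf.prob Q {\<omega>. T \<omega> = t} * (\<Prod>i<m. pmf (\<kappa> i t) (u i))" for t u
    unfolding Q_def
  proof (rule CI_gen[OF mn, where Ba="\<lambda>i. if i < m then {fst (u i)} else {x. undefined = u i}"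
          and Bb="\<lambda>i. if i < m then {snd (u i)} else UNIV" and Ba'="\<lambda>_. UNIV" and Bb'="\<lambda>_. UNIV"])
    show "{\<omega>. T \<omega> = t \<and> U \<omega> = u} = {\<omega>. (\<forall>i. fst \<omega> i \<in> (if i < m then {fst (u i)} else {x. undefined = u i}))
             \<and> (\<forall>i. snd \<omega> i \<in> (if i < m then {snd (u i)} else UNIV))}"
      by (auto simp: T_def U_def fun_eq_iff prod_eq_iff split: if_splits)
    show "{\<omega>. T \<omega> = t} = {\<omega>. (\<forall>i. fst \<omega> i \<in> UNIV) \<and> (\<forall>i. snd \<omega> i \<in> UNIV)}"
      by (simp add: T_def)
  next
    fix i assume i: "i < m"
    obtain a b where ui: "u i = (a, b)" by (cases "u i")
    show "measure_pmf.prob \<mu> (if i < m then {fst (u i)} else {x. undefined = u i}) *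
          measure_pmf.prob \<rho> (if i < m then {snd (u i)} else UNIV)
          \<le> measure_pmf.prob \<mu> UNIV * measure_pmf.prob \<rho> UNIV * pmf (\<kappa> i t) (u i)"
      using i by (simp add: ui \<kappa>_def pmf_pair measure_pmf_single)
  qed auto
  have ext: "\<And>\<omega> i. i \<ge> m \<Longrightarrow> U \<omega> i = undefined" by (simp add: U_def)
  note C = core[OF QE Zs ext CI]
  show ?thesis
  proof (rule order_trans[OF sum_sq_mono C])
    fix i assume i: "i < m"
    show "0 \<le> tvd (map_pmf (\<lambda>w. (Xv w i, Yv k Xp w i, Omv k Xp m n w i)) (cond_pmf Q E))
                      (map_pmf (\<lambda>w. (Xv w i, Yv k Xp w i, Omv k Xp m n w i)) Q)" by (rule tvd_nonneg)
    define g where "g x = (\<lambda>(u :: (nat \<Rightarrow> 'x) \<times> nat set). (fst u, Yf k Xp (fst u), (Inl (snd u, restrict (Yf k Xp (fst u)) (snd u)) :: (nat set \<times> (nat \<Rightarrow> 'x option)) + (nat \<Rightarrow> 'x)))) (fst x)" for x :: "((nat \<Rightarrow> 'x) \<times> nat set) \<times> unit \<times> 'z"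
    have e1: "map_pmf (\<lambda>w. (Xv w i, Yv k Xp w i, Omv k Xp m n w i)) (cond_pmf Q E)
            = map_pmf g (map_pmf (\<lambda>\<omega>. (U \<omega> i, T \<omega>, Z \<omega>)) (cond_pmf Q E))"
      unfolding map_pmf_comp using i
      by (intro map_pmf_cong refl) (simp add: g_def U_def Xv_def Yv_Yf Omv_def)
    have e2: "map_pmf (\<lambda>w. (Xv w i, Yv k Xp w i, Omv k Xp m n w i)) Q
            = map_pmf g (bind_pmf (map_pmf (\<lambda>\<omega>. (T \<omega>, Z \<omega>)) (cond_pmf Q E))
                (\<lambda>(t, z). map_pmf (\<lambda>u. (u, t, z)) (\<kappa> i t)))"
    proof -
      have "map_pmf g (bind_pmf (map_pmf (\<lambda>\<omega>. (T \<omega>, Z \<omega>)) (cond_pmf Q E))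
                (\<lambda>(t, z). map_pmf (\<lambda>u. (u, t, z)) (\<kappa> i t)))
           = map_pmf (\<lambda>u. g (u, (), undefined)) (pair_pmf \<mu> \<rho>)"
        by (simp add: map_bind_pmf case_prod_unfold map_pmf_comp \<kappa>_def g_def)
      also have "\<dots> = map_pmf (\<lambda>u. g (u, (), undefined)) (map_pmf (\<lambda>w. (fst w i, snd w i)) Q)"
        unfolding Q_def using mn i by (simp add: marg_round)
      also have "\<dots> = map_pmf (\<lambda>w. (Xv w i, Yv k Xp w i, Omv k Xp m n w i)) Q"
        unfolding map_pmf_comp using i by (intro map_pmf_cong refl) (simp add: g_def Xv_def Yv_Yf Omv_def)
      finally show ?thesis by simp
    qed
    show "tvd (map_pmf (\<lambda>w. (Xv w i, Yv k Xp w i, Omv k Xp m n w i)) (cond_pmf Q E))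
              (map_pmf (\<lambda>w. (Xv w i, Yv k Xp w i, Omv k Xp m n w i)) Q)
          \<le> tvd (map_pmf (\<lambda>\<omega>. (U \<omega> i, T \<omega>, Z \<omega>)) (cond_pmf Q E))
              (bind_pmf (map_pmf (\<lambda>\<omega>. (T \<omega>, Z \<omega>)) (cond_pmf Q E))
                (\<lambda>(t, z). map_pmf (\<lambda>u. (u, t, z)) (\<kappa> i t)))"
      unfolding e1 e2 by (rule tvd_map_le)
  qed
qed

lemma inst2:
  fixes \<mu> :: "(nat \<Rightarrow> 'x) pmf" and \<rho> :: "nat set pmf" and E :: "'x sample_pt set"
    and Z :: "'x sample_pt \<Rightarrow> 'z" and n m k :: nat and Xp :: "nat \<Rightarrow> 'x set"
  defines "Q \<equiv> pair_pmf (Pi_pmf {..<n} undefined (\<lambda>_. \<mu>)) (Pi_pmf {..<m} undefined (\<lambda>_. \<rho>))"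
  assumes mn: "m \<le> n" and QE: "measure_pmf.prob Q E > 0"
    and Zs: "finite Zs" "\<And>\<omega>. \<omega> \<in> set_pmf Q \<Longrightarrow> \<omega> \<in> E \<Longrightarrow> Z \<omega> \<in> Zs"
  shows "(\<Sum>i<m. (tvd (map_pmf (\<lambda>w. (Xv w i, Yv k Xp w i, Z w, Omv_minus k Xp m n i w)) (cond_pmf Q E))
                  (bind_pmf (map_pmf (\<lambda>w. (Yv k Xp w i, Z w, Omv_minus k Xp m n i w)) (cond_pmf Q E))
                     (\<lambda>(y, z, o'). map_pmf (\<lambda>x. (x, y, z, o'))
                         (cond_distr Q (\<lambda>w. Xv w i) (\<lambda>w. Yv k Xp w i) y))))\<^sup>2)
         \<le> ln (card Zs / measure_pmf.prob Q E)"
proof -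
  define U where "U \<omega> = (\<lambda>i. if i < m then fst \<omega> i else undefined)" for \<omega> :: "'x sample_pt"
  define T where "T \<omega> = ((\<lambda>i. Yv k Xp \<omega> i), snd \<omega>, (\<lambda>j. if j < m then undefined else fst \<omega> j))" for \<omega> :: "'x sample_pt"
  define \<kappa> where "\<kappa> i t = cond_distr Q (\<lambda>w. Xv w i) (\<lambda>w. Yv k Xp w i) (fst t i)"
    for i :: nat and t :: "(nat \<Rightarrow> nat \<Rightarrow> 'x option) \<times> (nat \<Rightarrow> nat set) \<times> (nat \<Rightarrow> nat \<Rightarrow> 'x)"
  have CI: "measure_pmf.prob Q {\<omega>. T \<omega> = t \<and> U \<omega> = u}
                 \<le> measure_pmf.prob Q {\<omega>. T \<omega> = t} * (\<Prod>i<m. pmf (\<kappa> i t) (u i))" for t u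
  proof -
    obtain y d c where t: "t = (y, d, c)" by (cases t) auto
    show ?thesis unfolding Q_def
    proof (rule CI_gen[OF mn,
          where Ba="\<lambda>i. {x. Yf k Xp x = y i \<and> (if i < m then undefined = c i \<and> x = u i else x = c i \<and> undefined = u i)}"
          and Bb="\<lambda>i. {d i}"
          and Ba'="\<lambda>i. {x. Yf k Xp x = y i \<and> (if i < m then undefined = c i else x = c i)}"
          and Bb'="\<lambda>i. {d i}"])
      show "{\<omega>. T \<omega> = t \<and> U \<omega> = u} = {\<omega>. (\<forall>i. fst \<omega> i \<in> {x. Yf k Xp x = y i \<and> (if i < m then undefined = c i \<and> x = u i else x = c i \<and> undefined = u i)})
             \<and> (\<forall>i. snd \<omega> i \<in> {d i})}"
        by (auto simp: T_def U_def t fun_eq_iff Yv_Yf split: if_splits)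
      show "{\<omega>. T \<omega> = t} = {\<omega>. (\<forall>i. fst \<omega> i \<in> {x. Yf k Xp x = y i \<and> (if i < m then undefined = c i else x = c i)})
             \<and> (\<forall>i. snd \<omega> i \<in> {d i})}"
        by (auto simp: T_def t fun_eq_iff Yv_Yf split: if_splits)
    next
      fix i assume i: "i < m"
      let ?X = "measure_pmf.prob \<mu> {x. Yf k Xp x = y i \<and> (if i < m then undefined = c i \<and> x = u i else x = c i \<and> undefined = u i)} * measure_pmf.prob \<rho> {d i}"
      let ?Y = "measure_pmf.prob \<mu> {x. Yf k Xp x = y i \<and> (if i < m then undefined = c i else x = c i)} * measure_pmf.prob \<rho> {d i}"
      show "?X \<le> ?Y * pmf (\<kappa> i t) (u i)"
      proof (rule per_aux)
        show "0 \<le> ?X" by simp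
        show "?X \<le> ?Y" by (intro mult_right_mono measure_pmf.finite_measure_mono) auto
        assume Yp: "?Y > 0"
        have uc: "undefined = c i"
        proof (rule ccontr)
          assume "undefined \<noteq> c i"
          hence e: "{x. Yf k Xp x = y i \<and> (if i < m then undefined = c i else x = c i)} = {}" using i by auto
          have "?Y = 0" unfolding e by simp
          thus False using Yp by linarith
        qed
        have pos2: "measure_pmf.prob \<mu> {x. Yf k Xp x = y i \<and> (if i < m then undefined = c i else x = c i)} > 0
                    \<and> measure_pmf.prob \<rho> {d i} > 0"
          using Yp measure_nonneg[of \<mu> "{x. Yf k Xp x = y i \<and> (if i < m then undefined = c i else x = c i)}"]
            measure_nonneg[of \<rho> "{d i}"] unfolding zero_less_mult_iff by linarith
        have rp: "measure_pmf.prob \<rho> {d i} > 0" using pos2 by simp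
        have se: "{x. Yf k Xp x = y i \<and> (if i < m then undefined = c i else x = c i)} = {x. Yf k Xp x = y i}"
          using i uc by auto
        have mp: "measure_pmf.prob \<mu> {x. Yf k Xp x = y i} > 0" using pos2 unfolding se by simp
        have q1: "measure_pmf.prob Q {w. Yv k Xp w i = y i} = measure_pmf.prob \<mu> {x. Yf k Xp x = y i}"
        proof -
          have es: "{w. Yv k Xp w i = y i} = {\<omega>. fst \<omega> i \<in> {x. Yf k Xp x = y i} \<and> snd \<omega> i \<in> UNIV}"
            by (auto simp: Yv_Yf)
          show ?thesis unfolding es Q_def round_prob[OF mn i] by simp
        qed
        have q2: "measure_pmf.prob Q {w. Xv w i = u i \<and> Yv k Xp w i = y i} = measure_pmf.prob \<mu> {x. Yf k Xp x = y i \<and> x = u i}"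
        proof -
          have es: "{w. Xv w i = u i \<and> Yv k Xp w i = y i} = {\<omega>. fst \<omega> i \<in> {x. Yf k Xp x = y i \<and> x = u i} \<and> snd \<omega> i \<in> UNIV}"
            by (auto simp: Yv_Yf Xv_def)
          show ?thesis unfolding es Q_def round_prob[OF mn i] by simp
        qed
        have "pmf (\<kappa> i t) (u i) = measure_pmf.prob \<mu> {x. Yf k Xp x = y i \<and> x = u i} / measure_pmf.prob \<mu> {x. Yf k Xp x = y i}"
          unfolding \<kappa>_def t fst_conv using mp q1 q2 by (subst pmf_cond_distr) simp_all
        thus "pmf (\<kappa> i t) (u i) = ?X / ?Y" using i uc rp by simp
      qed
    qed auto
  qed
  have ext: "\<And>\<omega> i. i \<ge> m \<Longrightarrow> U \<omega> i = undefined" by (simp add: U_def)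
  note C = core[OF QE Zs ext CI]
  show ?thesis
  proof (rule order_trans[OF sum_sq_mono C])
    fix i assume i: "i < m"
    show "0 \<le> tvd (map_pmf (\<lambda>w. (Xv w i, Yv k Xp w i, Z w, Omv_minus k Xp m n i w)) (cond_pmf Q E))
                  (bind_pmf (map_pmf (\<lambda>w. (Yv k Xp w i, Z w, Omv_minus k Xp m n i w)) (cond_pmf Q E))
                     (\<lambda>(y, z, o'). map_pmf (\<lambda>x. (x, y, z, o'))
                         (cond_distr Q (\<lambda>w. Xv w i) (\<lambda>w. Yv k Xp w i) y)))" by (rule tvd_nonneg)
    define OM where "OM t = (\<lambda>j. if j = i then undefined else if j < m then Inl (fst (snd t) j, restrict (fst t j) (fst (snd t) j))
         else if j < n then Inr (snd (snd t) j) else undefined)"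
      for t :: "(nat \<Rightarrow> nat \<Rightarrow> 'x option) \<times> (nat \<Rightarrow> nat set) \<times> (nat \<Rightarrow> nat \<Rightarrow> 'x)"
    have OMT: "OM (T w) = Omv_minus k Xp m n i w" for w
      by (simp add: OM_def T_def Omv_minus_def Omv_def fun_eq_iff)
    have fT: "fst (T w) i = Yv k Xp w i" for w by (simp add: T_def)
    define g where "g x = (fst x, fst (fst (snd x)) i, snd (snd x), OM (fst (snd x)))"
      for x :: "(nat \<Rightarrow> 'x) \<times> ((nat \<Rightarrow> nat \<Rightarrow> 'x option) \<times> (nat \<Rightarrow> nat set) \<times> (nat \<Rightarrow> nat \<Rightarrow> 'x)) \<times> 'z"
    have e1: "map_pmf (\<lambda>w. (Xv w i, Yv k Xp w i, Z w, Omv_minus k Xp m n i w)) (cond_pmf Q E)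
            = map_pmf g (map_pmf (\<lambda>\<omega>. (U \<omega> i, T \<omega>, Z \<omega>)) (cond_pmf Q E))"
      unfolding map_pmf_comp using i
      by (intro map_pmf_cong refl) (simp add: g_def U_def Xv_def OMT fT)
    have e2: "bind_pmf (map_pmf (\<lambda>w. (Yv k Xp w i, Z w, Omv_minus k Xp m n i w)) (cond_pmf Q E))
                     (\<lambda>(y, z, o'). map_pmf (\<lambda>x. (x, y, z, o'))
                         (cond_distr Q (\<lambda>w. Xv w i) (\<lambda>w. Yv k Xp w i) y))
            = map_pmf g (bind_pmf (map_pmf (\<lambda>\<omega>. (T \<omega>, Z \<omega>)) (cond_pmf Q E))
                (\<lambda>(t, z). map_pmf (\<lambda>u. (u, t, z)) (\<kappa> i t)))"
    proof -
      have "map_pmf (\<lambda>w. (Yv k Xp w i, Z w, Omv_minus k Xp m n i w)) (cond_pmf Q E)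
          = map_pmf (\<lambda>x. (fst (fst x) i, snd x, OM (fst x))) (map_pmf (\<lambda>\<omega>. (T \<omega>, Z \<omega>)) (cond_pmf Q E))"
        unfolding map_pmf_comp by (intro map_pmf_cong refl) (simp add: OMT fT)
      thus ?thesis
        by (simp add: bind_map_pmf map_bind_pmf map_pmf_comp case_prod_unfold g_def \<kappa>_def)
    qed
    show "tvd (map_pmf (\<lambda>w. (Xv w i, Yv k Xp w i, Z w, Omv_minus k Xp m n i w)) (cond_pmf Q E))
                  (bind_pmf (map_pmf (\<lambda>w. (Yv k Xp w i, Z w, Omv_minus k Xp m n i w)) (cond_pmf Q E))
                     (\<lambda>(y, z, o'). map_pmf (\<lambda>x. (x, y, z, o'))
                         (cond_distr Q (\<lambda>w. Xv w i) (\<lambda>w. Yv k Xp w i) y)))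
          \<le> tvd (map_pmf (\<lambda>\<omega>. (U \<omega> i, T \<omega>, Z \<omega>)) (cond_pmf Q E))
              (bind_pmf (map_pmf (\<lambda>\<omega>. (T \<omega>, Z \<omega>)) (cond_pmf Q E))
                (\<lambda>(t, z). map_pmf (\<lambda>u. (u, t, z)) (\<kappa> i t)))"
      unfolding e1 e2 by (rule tvd_map_le)
  qed
qed

lemma inst3:
  fixes \<mu> :: "(nat \<Rightarrow> 'x) pmf" and \<rho> :: "nat set pmf" and E :: "'x sample_pt set"
    and Z :: "'x sample_pt \<Rightarrow> 'z" and n m k :: nat and Xp :: "nat \<Rightarrow> 'x set"
  defines "Q \<equiv> pair_pmf (Pi_pmf {..<n} undefined (\<lambda>_. \<mu>)) (Pi_pmf {..<m} undefined (\<lambda>_. \<rho>))"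
  assumes mn: "m \<le> n" and QE: "measure_pmf.prob Q E > 0"
    and Zs: "finite Zs" "\<And>\<omega>. \<omega> \<in> set_pmf Q \<Longrightarrow> \<omega> \<in> E \<Longrightarrow> Z \<omega> \<in> Zs"
  shows "(\<Sum>i<m. (tvd (map_pmf (\<lambda>w. (Yv k Xp w i, Z w, Omv k Xp m n w)) (cond_pmf Q E))
                  (bind_pmf (map_pmf (\<lambda>w. (Z w, Omv k Xp m n w)) (cond_pmf Q E))
                     (\<lambda>(z, o'). map_pmf (\<lambda>y. (y, z, o'))
                         (cond_distr Q (\<lambda>w. Yv k Xp w i) (\<lambda>w. Omv k Xp m n w i) (o' i)))))\<^sup>2)
         \<le> ln (card Zs / measure_pmf.prob Q E)"
proof -
  define U where "U \<omega> = (\<lambda>i. if i < m then Yv k Xp \<omega> i else undefined)" for \<omega> :: "'x sample_pt"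
  define T where "T \<omega> = Omv k Xp m n \<omega>" for \<omega> :: "'x sample_pt"
  define \<kappa> where "\<kappa> i t = cond_distr Q (\<lambda>w. Yv k Xp w i) (\<lambda>w. Omv k Xp m n w i) (t i)"
    for i :: nat and t :: "nat \<Rightarrow> (nat set \<times> (nat \<Rightarrow> 'x option)) + (nat \<Rightarrow> 'x)"
  have CI: "measure_pmf.prob Q {\<omega>. T \<omega> = t \<and> U \<omega> = u}
                 \<le> measure_pmf.prob Q {\<omega>. T \<omega> = t} * (\<Prod>i<m. pmf (\<kappa> i t) (u i))" for t u
  proof -
    define BA' where "BA' j = {x. if j < m then (case t j of Inl p \<Rightarrow> restrict (Yf k Xp x) (fst p) = snd p | Inr _ \<Rightarrow> False)
                   else if j < n then Inr x = t j else undefined = t j}" for j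
    define BA where "BA j = BA' j \<inter> {x. if j < m then Yf k Xp x = u j else undefined = u j}" for j
    define BB where "BB j = (if j < m then (case t j of Inl p \<Rightarrow> {fst p} | Inr _ \<Rightarrow> UNIV) else UNIV)" for j
    have pw: "(Omv k Xp m n \<omega> j = t j) = (fst \<omega> j \<in> BA' j \<and> snd \<omega> j \<in> BB j)" for \<omega> j
    proof (cases "j < m")
      case True
      show ?thesis
      proof (cases "t j")
        case (Inl p)
        obtain d yy where p: "p = (d, yy)" by (cases p)
        have "Omv k Xp m n \<omega> j = Inl (snd \<omega> j, restrict (Yf k Xp (fst \<omega> j)) (snd \<omega> j))"
          using True by (simp add: Omv_def Yv_Yf)
        moreover have "BA' j = {x. restrict (Yf k Xp x) d = yy}" using True Inl p by (simp add: BA'_def)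
        moreover have "BB j = {d}" using True Inl p by (simp add: BB_def)
        ultimately show ?thesis using Inl p by auto
      next
        case (Inr x)
        have "Omv k Xp m n \<omega> j = Inl (snd \<omega> j, restrict (Yf k Xp (fst \<omega> j)) (snd \<omega> j))"
          using True by (simp add: Omv_def Yv_Yf)
        moreover have "BA' j = {}" using True Inr by (simp add: BA'_def)
        ultimately show ?thesis using Inr by simp
      qed
    next
      case False
      have "BB j = UNIV" using False by (simp add: BB_def)
      moreover have "Omv k Xp m n \<omega> j = (if j < n then Inr (fst \<omega> j) else undefined)"
        using False by (simp add: Omv_def)
      moreover have "BA' j = {x. if j < n then Inr x = t j else undefined = t j}"
        using False by (simp add: BA'_def)
      ultimately show ?thesis by auto
    qed
    have pwU: "(U \<omega> j = u j) = (if j < m then Yf k Xp (fst \<omega> j) = u j else undefined = u j)" for \<omega> j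
      by (simp add: U_def Yv_Yf)
    have Teq: "(T \<omega> = t) = (\<forall>j. Omv k Xp m n \<omega> j = t j)" for \<omega> by (simp add: T_def fun_eq_iff)
    have Ueq: "(U \<omega> = u) = (\<forall>j. U \<omega> j = u j)" for \<omega> by (rule fun_eq_iff)
    show ?thesis unfolding Q_def
    proof (rule CI_gen[OF mn, where Ba=BA and Bb=BB and Ba'=BA' and Bb'=BB])
      show "{\<omega>. T \<omega> = t \<and> U \<omega> = u} = {\<omega>. (\<forall>i. fst \<omega> i \<in> BA i) \<and> (\<forall>i. snd \<omega> i \<in> BB i)}"
        unfolding Teq Ueq pw pwU BA_def by auto
      show "{\<omega>. T \<omega> = t} = {\<omega>. (\<forall>i. fst \<omega> i \<in> BA' i) \<and> (\<forall>i. snd \<omega> i \<in> BB i)}"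
        unfolding Teq pw by auto
      show "\<And>i. BA i \<subseteq> BA' i" by (auto simp: BA_def)
    next
      fix i assume i: "i < m"
      let ?X = "measure_pmf.prob \<mu> (BA i) * measure_pmf.prob \<rho> (BB i)"
      let ?Y = "measure_pmf.prob \<mu> (BA' i) * measure_pmf.prob \<rho> (BB i)"
      show "?X \<le> ?Y * pmf (\<kappa> i t) (u i)"
      proof (rule per_aux)
        show "0 \<le> ?X" by simp
        show "?X \<le> ?Y" by (intro mult_right_mono measure_pmf.finite_measure_mono) (auto simp: BA_def)
        assume Yp: "?Y > 0"
        obtain p where tp: "t i = Inl p"
        proof (cases "t i")
          case (Inl p) thus ?thesis using that by simp
        next
          case (Inr x)
          hence "BA' i = {}" using i by (auto simp: BA'_def)
          hence "?Y = 0" by simp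
          thus ?thesis using Yp by linarith
        qed
        have q1: "measure_pmf.prob Q {w. Omv k Xp m n w i = t i} = ?Y"
        proof -
          have es: "{w. Omv k Xp m n w i = t i} = {\<omega>. fst \<omega> i \<in> BA' i \<and> snd \<omega> i \<in> BB i}"
            using pw by auto
          show ?thesis unfolding es Q_def round_prob[OF mn i] ..
        qed
        have q2: "measure_pmf.prob Q {w. Yv k Xp w i = u i \<and> Omv k Xp m n w i = t i} = ?X"
        proof -
          have es: "{w. Yv k Xp w i = u i \<and> Omv k Xp m n w i = t i} = {\<omega>. fst \<omega> i \<in> BA i \<and> snd \<omega> i \<in> BB i}"
            using pw i by (auto simp: BA_def Yv_Yf)
          show ?thesis unfolding es Q_def round_prob[OF mn i] ..
        qed
        show "pmf (\<kappa> i t) (u i) = ?X / ?Y"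
          unfolding \<kappa>_def using Yp q1 q2 by (subst pmf_cond_distr) simp_all
      qed
    qed auto
  qed
  have ext: "\<And>\<omega> i. i \<ge> m \<Longrightarrow> U \<omega> i = undefined" by (simp add: U_def)
  note C = core[OF QE Zs ext CI]
  show ?thesis
  proof (rule order_trans[OF sum_sq_mono C])
    fix i assume i: "i < m"
    show "0 \<le> tvd (map_pmf (\<lambda>w. (Yv k Xp w i, Z w, Omv k Xp m n w)) (cond_pmf Q E))
                  (bind_pmf (map_pmf (\<lambda>w. (Z w, Omv k Xp m n w)) (cond_pmf Q E))
                     (\<lambda>(z, o'). map_pmf (\<lambda>y. (y, z, o'))
                         (cond_distr Q (\<lambda>w. Yv k Xp w i) (\<lambda>w. Omv k Xp m n w i) (o' i))))" by (rule tvd_nonneg)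
    define g where "g x = (fst x, snd (snd x), fst (snd x))"
      for x :: "(nat \<Rightarrow> 'x option) \<times> (nat \<Rightarrow> (nat set \<times> (nat \<Rightarrow> 'x option)) + (nat \<Rightarrow> 'x)) \<times> 'z"
    have e1: "map_pmf (\<lambda>w. (Yv k Xp w i, Z w, Omv k Xp m n w)) (cond_pmf Q E)
            = map_pmf g (map_pmf (\<lambda>\<omega>. (U \<omega> i, T \<omega>, Z \<omega>)) (cond_pmf Q E))"
      unfolding map_pmf_comp using i
      by (intro map_pmf_cong refl) (simp add: g_def U_def T_def)
    have e2: "bind_pmf (map_pmf (\<lambda>w. (Z w, Omv k Xp m n w)) (cond_pmf Q E))
                     (\<lambda>(z, o'). map_pmf (\<lambda>y. (y, z, o'))
                         (cond_distr Q (\<lambda>w. Yv k Xp w i) (\<lambda>w. Omv k Xp m n w i) (o' i)))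
            = map_pmf g (bind_pmf (map_pmf (\<lambda>\<omega>. (T \<omega>, Z \<omega>)) (cond_pmf Q E))
                (\<lambda>(t, z). map_pmf (\<lambda>u. (u, t, z)) (\<kappa> i t)))"
    proof -
      have "map_pmf (\<lambda>w. (Z w, Omv k Xp m n w)) (cond_pmf Q E)
          = map_pmf (\<lambda>x. (snd x, fst x)) (map_pmf (\<lambda>\<omega>. (T \<omega>, Z \<omega>)) (cond_pmf Q E))"
        unfolding map_pmf_comp by (intro map_pmf_cong refl) (simp add: T_def)
      thus ?thesis
        by (simp add: bind_map_pmf map_bind_pmf map_pmf_comp case_prod_unfold g_def \<kappa>_def)
    qed
    show "tvd (map_pmf (\<lambda>w. (Yv k Xp w i, Z w, Omv k Xp m n w)) (cond_pmf Q E))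
                  (bind_pmf (map_pmf (\<lambda>w. (Z w, Omv k Xp m n w)) (cond_pmf Q E))
                     (\<lambda>(z, o'). map_pmf (\<lambda>y. (y, z, o'))
                         (cond_distr Q (\<lambda>w. Yv k Xp w i) (\<lambda>w. Omv k Xp m n w i) (o' i))))
          \<le> tvd (map_pmf (\<lambda>\<omega>. (U \<omega> i, T \<omega>, Z \<omega>)) (cond_pmf Q E))
              (bind_pmf (map_pmf (\<lambda>\<omega>. (T \<omega>, Z \<omega>)) (cond_pmf Q E))
                (\<lambda>(t, z). map_pmf (\<lambda>u. (u, t, z)) (\<kappa> i t)))"
      unfolding e1 e2 by (rule tvd_map_le)
  qed
qed

lemma final_arith:
  fixes s :: "nat \<Rightarrow> real" and Ap :: nat and p :: real and m n :: nat
  assumes m1: "1 \<le> m" and s0: "\<And>i. i < m \<Longrightarrow> 0 \<le> s i" and Ap1: "1 \<le> Ap" and p0: "0 < p" and p1: "p \<le> 1"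
    and H: "(\<Sum>i<m. (s i)\<^sup>2) \<le> ln (real (Ap ^ (n - m)) / p)"
  shows "(\<Sum>i<m. s i) / real m \<le> sqrt ((real (n - m) * log 2 (real Ap) + log 2 (1 / p)) / real m)"
proof -
  define x where "x = real (Ap ^ (n - m)) / p"
  have A1: "real (Ap ^ (n - m)) \<ge> 1" using Ap1 by (simp add: one_le_power)
  have x1: "x \<ge> 1" unfolding x_def using A1 p0 p1 by (simp add: le_divide_eq) 
  have lnx: "ln x \<ge> 0" using x1 by simp
  have ln2: "0 < ln (2::real)" "ln (2::real) \<le> 1" using ln_le_minus_one[of "2::real"] by auto
  have "ln x \<le> ln x / ln 2"
  proof -
    have "ln x * ln 2 \<le> ln x * 1" using lnx ln2 by (intro mult_left_mono) auto
    thus ?thesis using ln2 by (simp add: le_divide_eq)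
  qed
  also have "ln x / ln 2 = log 2 x" by (simp add: log_def)
  also have "log 2 x = real (n - m) * log 2 (real Ap) + log 2 (1 / p)"
  proof -
    have "log 2 x = log 2 (real (Ap ^ (n - m))) + log 2 (1 / p)"
      unfolding x_def using A1 p0 Ap1 by (simp add: log_divide)
    also have "log 2 (real (Ap ^ (n - m))) = real (n - m) * log 2 (real Ap)"
      by (simp add: log_nat_power)
    finally show ?thesis .
  qed
  finally have HL: "(\<Sum>i<m. (s i)\<^sup>2) \<le> real (n - m) * log 2 (real Ap) + log 2 (1 / p)"
    using H unfolding x_def by linarith
  define L where "L = real (n - m) * log 2 (real Ap) + log 2 (1 / p)"
  have mp: "real m > 0" using m1 by simp
  have "(\<Sum>i<m. s i)\<^sup>2 \<le> real m * L" using sum_sq_le[of s m] HL mp unfolding L_def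
    by (smt (verit) mult_left_mono)
  hence "((\<Sum>i<m. s i) / real m)\<^sup>2 \<le> L / real m"
    using mp by (simp add: power_divide field_simps power2_eq_square)
  hence "(\<Sum>i<m. s i) / real m \<le> sqrt (L / real m)" by (rule real_le_rsqrt)
  thus ?thesis by (simp add: L_def)
qed

theorem lemma4p3:
  fixes k n m :: nat
    and Xs Xp :: "nat \<Rightarrow> 'x set"
    and As :: "nat \<Rightarrow> 'a set"
    and \<mu> :: "(nat \<Rightarrow> 'x) pmf"
    and V :: "(nat \<Rightarrow> 'x) \<Rightarrow> (nat \<Rightarrow> 'a) \<Rightarrow> bool"
    and \<alpha> :: real
    and f :: "nat \<Rightarrow> (nat \<Rightarrow> 'x) \<Rightarrow> (nat \<Rightarrow> 'a)"
  assumes k: "1 \<le> k"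
    and As_fin: "\<forall>t<k. finite (As t)"
    and anch: "anchored k Xs \<mu> \<alpha> Xp"
    and m: "1 \<le> m" "m < n"
    and strat: "\<forall>t<k. \<forall>q. (\<forall>i<n. q i \<in> Xs t) \<longrightarrow> (\<forall>i<n. f t q i \<in> As t)"
    and W_pos: "measure_pmf.prob (sample k n m \<mu>) (Win k f V m n) > 0"
  shows
   "let P = sample k n m \<mu>;
        PW = cond_pmf P (Win k f V m n);
        \<delta> = (real (n - m) * log 2 (real (\<Prod>t<k. card (As t)))
              + log 2 (1 / measure_pmf.prob P (Win k f V m n))) / real m
    in
     (\<Sum>i<m. tvd (map_pmf (\<lambda>w. (Xv w i, Yv k Xp w i, Omv k Xp m n w i)) PW)
                  (map_pmf (\<lambda>w. (Xv w i, Yv k Xp w i, Omv k Xp m n w i)) P)) / real m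
       \<le> sqrt \<delta>
   \<and> (\<Sum>i<m. tvd (map_pmf (\<lambda>w. (Xv w i, Yv k Xp w i, Zv k f m n w, Omv_minus k Xp m n i w)) PW)
                  (bind_pmf (map_pmf (\<lambda>w. (Yv k Xp w i, Zv k f m n w, Omv_minus k Xp m n i w)) PW)
                     (\<lambda>(y, z, o'). map_pmf (\<lambda>x. (x, y, z, o'))
                         (cond_distr P (\<lambda>w. Xv w i) (\<lambda>w. Yv k Xp w i) y)))) / real m
       \<le> sqrt \<delta>
   \<and> (\<Sum>i<m. tvd (map_pmf (\<lambda>w. (Yv k Xp w i, Zv k f m n w, Omv k Xp m n w)) PW)
                  (bind_pmf (map_pmf (\<lambda>w. (Zv k f m n w, Omv k Xp m n w)) PW)
                     (\<lambda>(z, o'). map_pmf (\<lambda>y. (y, z, o'))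
                         (cond_distr P (\<lambda>w. Yv k Xp w i) (\<lambda>w. Omv k Xp m n w i) (o' i))))) / real m
       \<le> sqrt \<delta>"
proof -
  define \<rho> where "\<rho> = pmf_of_set {S. S \<subseteq> {..<k} \<and> card S = k - 1}"
  define P where "P = sample k n m \<mu>"
  have P_eq: "P = pair_pmf (Pi_pmf {..<n} undefined (\<lambda>_. \<mu>)) (Pi_pmf {..<m} undefined (\<lambda>_. \<rho>))"
    by (simp add: P_def sample_def \<rho>_def)
  define W where "W = Win k f V m n"
  have mn: "m \<le> n" using m by simp
  have QE: "measure_pmf.prob P W > 0" using W_pos by (simp add: P_def W_def)
  have QE': "measure_pmf.prob (pair_pmf (Pi_pmf {..<n} undefined (\<lambda>_. \<mu>)) (Pi_pmf {..<m} undefined (\<lambda>_. \<rho>))) W > 0"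
    using QE by (simp add: P_eq)
  have suppmu: "set_pmf \<mu> \<subseteq> PiE {..<k} Xs" using anch by (simp add: anchored_def)
  define Ap where "Ap = (\<Prod>t<k. card (As t))"
  define Zs where "Zs = PiE {m..<n} (\<lambda>_. PiE {..<k} As)"
  have finZ: "finite Zs" unfolding Zs_def using As_fin by (intro finite_PiE) auto
  have cardZ: "card Zs = Ap ^ (n - m)"
    unfolding Zs_def Ap_def by (simp add: card_PiE)
  have Zin: "Zv k f m n \<omega> \<in> Zs" if w: "\<omega> \<in> set_pmf P" for \<omega>
  proof -
    have "fst \<omega> \<in> set_pmf (Pi_pmf {..<n} undefined (\<lambda>_. \<mu>))" using w by (auto simp: P_eq)
    hence fi: "fst \<omega> i \<in> set_pmf \<mu>" if "i < n" for i
      using that by (auto simp: set_Pi_pmf PiE_dflt_def)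
    have X: "fst \<omega> i t \<in> Xs t" if "i < n" "t < k" for i t
      using fi[OF that(1)] suppmu that(2) by (auto simp: PiE_def Pi_def)
    have "Av k f \<omega> j \<in> PiE {..<k} As" if "j \<in> {m..<n}" for j
    proof -
      have "f t (\<lambda>i. fst \<omega> i t) j \<in> As t" if "t < k" for t
        using strat that X \<open>j \<in> {m..<n}\<close> by auto
      thus ?thesis by (auto simp: Av_def PiE_def Pi_def extensional_def)
    qed
    thus ?thesis by (auto simp: Zv_def Zs_def)
  qed
  have Zin': "Zv k f m n \<omega> \<in> Zs" if "\<omega> \<in> set_pmf (pair_pmf (Pi_pmf {..<n} undefined (\<lambda>_. \<mu>)) (Pi_pmf {..<m} undefined (\<lambda>_. \<rho>)))" for \<omega>
    using Zin that by (simp add: P_eq)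
  have Ap1: "1 \<le> Ap"
  proof -
    obtain x where x: "x \<in> set_pmf \<mu>" using set_pmf_not_empty[of \<mu>] by blast
    have "As t \<noteq> {}" if t: "t < k" for t
    proof -
      have "x t \<in> Xs t" using x suppmu t by (auto simp: PiE_def Pi_def)
      hence "f t (\<lambda>i. x t) 0 \<in> As t" using strat t m by auto
      thus ?thesis by auto
    qed
    hence "card (As t) \<ge> 1" if "t < k" for t using As_fin that by (simp add: Suc_le_eq card_gt_0_iff)
    hence "(\<Prod>t<k. card (As t)) \<ge> (\<Prod>t<k. (1::nat))" by (intro prod_mono) auto
    thus ?thesis by (simp add: Ap_def)
  qed
  have p1: "measure_pmf.prob P W \<le> 1" by simp
  note I1 = inst1[OF mn QE' finZ Zin', where k=k and Xp=Xp]
  note I2 = inst2[OF mn QE' finZ Zin', where k=k and Xp=Xp]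
  note I3 = inst3[OF mn QE' finZ Zin', where k=k and Xp=Xp]
  have F1: "(\<Sum>i<m. tvd (map_pmf (\<lambda>w. (Xv w i, Yv k Xp w i, Omv k Xp m n w i)) (cond_pmf P W))
                  (map_pmf (\<lambda>w. (Xv w i, Yv k Xp w i, Omv k Xp m n w i)) P)) / real m
       \<le> sqrt ((real (n - m) * log 2 (real Ap) + log 2 (1 / measure_pmf.prob P W)) / real m)"
    by (rule final_arith[OF m(1) _ Ap1 QE p1]) (use I1 in \<open>simp_all add: P_eq cardZ tvd_nonneg\<close>)
  have F2: "(\<Sum>i<m. tvd (map_pmf (\<lambda>w. (Xv w i, Yv k Xp w i, Zv k f m n w, Omv_minus k Xp m n i w)) (cond_pmf P W))
                  (bind_pmf (map_pmf (\<lambda>w. (Yv k Xp w i, Zv k f m n w, Omv_minus k Xp m n i w)) (cond_pmf P W))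
                     (\<lambda>(y, z, o'). map_pmf (\<lambda>x. (x, y, z, o'))
                         (cond_distr P (\<lambda>w. Xv w i) (\<lambda>w. Yv k Xp w i) y)))) / real m
       \<le> sqrt ((real (n - m) * log 2 (real Ap) + log 2 (1 / measure_pmf.prob P W)) / real m)"
    by (rule final_arith[OF m(1) _ Ap1 QE p1]) (use I2 in \<open>simp_all add: P_eq cardZ tvd_nonneg\<close>)
  have F3: "(\<Sum>i<m. tvd (map_pmf (\<lambda>w. (Yv k Xp w i, Zv k f m n w, Omv k Xp m n w)) (cond_pmf P W))
                  (bind_pmf (map_pmf (\<lambda>w. (Zv k f m n w, Omv k Xp m n w)) (cond_pmf P W))
                     (\<lambda>(z, o'). map_pmf (\<lambda>y. (y, z, o'))
                         (cond_distr P (\<lambda>w. Yv k Xp w i) (\<lambda>w. Omv k Xp m n w i) (o' i))))) / real m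
       \<le> sqrt ((real (n - m) * log 2 (real Ap) + log 2 (1 / measure_pmf.prob P W)) / real m)"
    by (rule final_arith[OF m(1) _ Ap1 QE p1]) (use I3 in \<open>simp_all add: P_eq cardZ tvd_nonneg\<close>)
  show ?thesis using F1 F2 F3 unfolding Let_def P_def W_def Ap_def by blast
qed

end
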